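(* Let $n,m\ge1$, $c_1,\dots,c_n>0$, $T>0$, $\epsilon>0$, $\kappa_{ij}\ge0$, $\bar r_1,\dots,\bar r_m>0$, $R=\prod_i[0,\bar r_i]$. For each $i$ let $U_i:[0,\bar r_i]\to\mathbb{R}$ be continuous, nondecreasing and strictly concave. Let $\varphi^i_\epsilon(\mu)=-\epsilon\log\sum_je^{-(\kappa_{ij}+\mu_j)/\epsilon}$ and define on $R\times[0,T)^n$ $$W(r,\mu)=\sum_i\big[r_i\varphi^i_\epsilon(\mu)-U_i(r_i)\big]+\sum_jc_j\log\Big(1-\frac{\mu_j}{T}\Big).$$ Let $\mathcal{C}(r)$ be the minimum of $\sum_{i,j}\kappa_{ij}x_{ij}+\sum_j\beta_j(q_j)+\epsilon\sum_{i,j}x_{ij}\log(x_{ij}/r_i)$ over $x_{ij}\ge0$, $\sum_jx_{ij}=r_i$, $\sum_ix_{ij}=q_j/T$ (with $\beta_j(q)=0$ for $q\le c_j$, $\beta_j(q)=q-c_j-c_j\log(q/c_j)$ for $q>c_j$), and let $\psi(r)=\mathcal{C}(r)-\sum_iU_i(r_i)$. Then there exists a unique $(r^*,\mu^* )\in R\times[0,T)^n$ such that $$W(r^*,\mu)\le W(r^*,\mu^* )\le W(r,\mu^* )\quad\forall r\in R,\ \mu\in[0,T)^n.$$ Furthermore, $r^*=\arg\min_{r\in R}\psi(r)$.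
   Context: Convention $0\log0=0$ (terms with $x_{ij}=0$ contribute zero). The $U_i$ are utility functions modeling elastic EV charging demand; strict concavity on $[0,\bar r_i]$ is the paper's standing Assumption 1. *)

theory Defs
  imports "HOL-Analysis.Analysis" "HOL-Library.FuncSet"
begin

definition strict_concave_on :: "real set \<Rightarrow> (real \<Rightarrow> real) \<Rightarrow> bool" where
  "strict_concave_on S f \<longleftrightarrow>
     (\<forall>x\<in>S. \<forall>y\<in>S. x \<noteq> y \<longrightarrow> (\<forall>t::real. 0 < t \<and> t < 1 \<longrightarrow>
        f ((1 - t) * x + t * y) > (1 - t) * f x + t * f y))"

text \<open>Indices: i ranges over {..<m} (demands r_i), j over {..<n} (prices mu_j).\<close>

definition phi :: "nat \<Rightarrow> real \<Rightarrow> (nat \<Rightarrow> nat \<Rightarrow> real) \<Rightarrow> nat \<Rightarrow> (nat \<Rightarrow> real) \<Rightarrow> real" where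
  "phi n \<epsilon> \<kappa> i \<mu> = - \<epsilon> * ln (\<Sum>j<n. exp (- (\<kappa> i j + \<mu> j) / \<epsilon>))"

definition W :: "nat \<Rightarrow> nat \<Rightarrow> (nat \<Rightarrow> real) \<Rightarrow> real \<Rightarrow> real \<Rightarrow> (nat \<Rightarrow> nat \<Rightarrow> real)
                 \<Rightarrow> (nat \<Rightarrow> real \<Rightarrow> real) \<Rightarrow> (nat \<Rightarrow> real) \<Rightarrow> (nat \<Rightarrow> real) \<Rightarrow> real" where
  "W n m c T \<epsilon> \<kappa> U r \<mu> =
     (\<Sum>i<m. r i * phi n \<epsilon> \<kappa> i \<mu> - U i (r i)) + (\<Sum>j<n. c j * ln (1 - \<mu> j / T))"

definition beta :: "real \<Rightarrow> real \<Rightarrow> real" where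
  "beta cj q = (if q \<le> cj then 0 else q - cj - cj * ln (q / cj))"

definition xlogx :: "real \<Rightarrow> real \<Rightarrow> real" where
  "xlogx x r = (if x = 0 then 0 else x * ln (x / r))"

text \<open>Feasible transport plans for demand r (q_j := T * sum_i x_ij is eliminated).\<close>
definition feasible :: "nat \<Rightarrow> nat \<Rightarrow> (nat \<Rightarrow> real) \<Rightarrow> (nat \<Rightarrow> nat \<Rightarrow> real) \<Rightarrow> bool" where
  "feasible n m r x \<longleftrightarrow> (\<forall>i<m. \<forall>j<n. 0 \<le> x i j) \<and> (\<forall>i<m. (\<Sum>j<n. x i j) = r i)"

definition cost :: "nat \<Rightarrow> nat \<Rightarrow> (nat \<Rightarrow> real) \<Rightarrow> real \<Rightarrow> real \<Rightarrow> (nat \<Rightarrow> nat \<Rightarrow> real)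
                    \<Rightarrow> (nat \<Rightarrow> real) \<Rightarrow> (nat \<Rightarrow> nat \<Rightarrow> real) \<Rightarrow> real" where
  "cost n m c T \<epsilon> \<kappa> r x =
     (\<Sum>i<m. \<Sum>j<n. \<kappa> i j * x i j) + (\<Sum>j<n. beta (c j) (T * (\<Sum>i<m. x i j)))
     + \<epsilon> * (\<Sum>i<m. \<Sum>j<n. xlogx (x i j) (r i))"

text \<open>C(r): the minimum of the cost over feasible plans (attained; written as Inf).\<close>
definition Cmin :: "nat \<Rightarrow> nat \<Rightarrow> (nat \<Rightarrow> real) \<Rightarrow> real \<Rightarrow> real \<Rightarrow> (nat \<Rightarrow> nat \<Rightarrow> real)
                    \<Rightarrow> (nat \<Rightarrow> real) \<Rightarrow> real" where
  "Cmin n m c T \<epsilon> \<kappa> r = (INF x \<in> {x. feasible n m r x}. cost n m c T \<epsilon> \<kappa> r x)"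

definition psi :: "nat \<Rightarrow> nat \<Rightarrow> (nat \<Rightarrow> real) \<Rightarrow> real \<Rightarrow> real \<Rightarrow> (nat \<Rightarrow> nat \<Rightarrow> real)
                    \<Rightarrow> (nat \<Rightarrow> real \<Rightarrow> real) \<Rightarrow> (nat \<Rightarrow> real) \<Rightarrow> real" where
  "psi n m c T \<epsilon> \<kappa> U r = Cmin n m c T \<epsilon> \<kappa> r - (\<Sum>i<m. U i (r i))"

end

theory Submission
  imports Defs
begin



definition amin :: "real \<Rightarrow> (real \<Rightarrow> real) \<Rightarrow> real \<Rightarrow> real" where
  "amin b f a = (THE \<rho>. \<rho> \<in> {0..b} \<and> (\<forall>y\<in>{0..b}. a*\<rho> - f \<rho> \<le> a*y - f y))"

lemma argmin_ex1:
  fixes f :: "real \<Rightarrow> real" and b a :: real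
  assumes "b > 0" "continuous_on {0..b} f" "strict_concave_on {0..b} f"
  shows "\<exists>!\<rho>. \<rho> \<in> {0..b} \<and> (\<forall>y\<in>{0..b}. a*\<rho> - f \<rho> \<le> a*y - f y)"
proof -
  have "continuous_on {0..b} (\<lambda>y. a*y - f y)"
    by (intro continuous_intros assms)
  then obtain \<rho> where r: "\<rho> \<in> {0..b}" "\<forall>y\<in>{0..b}. a*\<rho> - f \<rho> \<le> a*y - f y"
    using continuous_attains_inf[of "{0..b}" "\<lambda>y. a*y - f y"] assms(1) by auto
  show ?thesis
  proof (rule ex1I[of _ \<rho>])
    show "\<rho> \<in> {0..b} \<and> (\<forall>y\<in>{0..b}. a*\<rho> - f \<rho> \<le> a*y - f y)" using r by auto
  next
    fix s assume s: "s \<in> {0..b} \<and> (\<forall>y\<in>{0..b}. a * s - f s \<le> a*y - f y)"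
    show "s = \<rho>"
    proof (rule ccontr)
      assume ne: "s \<noteq> \<rho>"
      define z where "z = (1 - 1/2) * s + (1/2) * \<rho>"
      have z: "z \<in> {0..b}" using s r unfolding z_def by auto
      have "f z > (1 - 1/2) * f s + (1/2) * f \<rho>"
        unfolding z_def using assms(3)[unfolded strict_concave_on_def, rule_format, of s \<rho> "1/2"] s r ne by auto
      moreover have "a * s - f s \<le> a*z - f z" "a*\<rho> - f \<rho> \<le> a*z - f z" using s r z by auto
      ultimately show False unfolding z_def by (simp add: algebra_simps)
    qed
  qed
qed

lemma amin_prop:
  assumes "b > 0" "continuous_on {0..b} f" "strict_concave_on {0..b} f"
  shows "amin b f a \<in> {0..b}" "\<And>y. y \<in> {0..b} \<Longrightarrow> a * amin b f a - f (amin b f a) \<le> a*y - f y"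
proof -
  have "amin b f a \<in> {0..b} \<and> (\<forall>y\<in>{0..b}. a * amin b f a - f (amin b f a) \<le> a*y - f y)"
    unfolding amin_def by (rule theI'[OF argmin_ex1[OF assms]])
  thus "amin b f a \<in> {0..b}" "\<And>y. y \<in> {0..b} \<Longrightarrow> a * amin b f a - f (amin b f a) \<le> a*y - f y"
    by blast+
qed

lemma amin_unique:
  assumes "b > 0" "continuous_on {0..b} f" "strict_concave_on {0..b} f"
    and "\<rho> \<in> {0..b}" "\<forall>y\<in>{0..b}. a*\<rho> - f \<rho> \<le> a*y - f y"
  shows "\<rho> = amin b f a"
  unfolding amin_def by (rule the1_equality[OF argmin_ex1[OF assms(1-3)], symmetric]) (use assms(4,5) in blast)

lemma amin_cont:
  assumes "b > 0" "continuous_on {0..b} f" "strict_concave_on {0..b} f" "e > 0"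
  shows "\<exists>\<eta>>0. \<forall>a'. \<bar>a' - a\<bar> < \<eta> \<longrightarrow> \<bar>amin b f a' - amin b f a\<bar> < e"
proof -
  define s where "s = amin b f a"
  define g where "g y = (a*y - f y) - (a * s - f s)" for y
  have s: "s \<in> {0..b}" "\<And>y. y \<in> {0..b} \<Longrightarrow> a * s - f s \<le> a*y - f y"
    using amin_prop[OF assms(1-3)] unfolding s_def by auto
  define K where "K = {0..b} \<inter> {y. e \<le> \<bar>y - s\<bar>}"
  have key: "\<And>a'. g (amin b f a') \<le> \<bar>a' - a\<bar> * b"
  proof -
    fix a'
    define s' where "s' = amin b f a'"
    have s': "s' \<in> {0..b}" "a' * s' - f s' \<le> a' * s - f s"
      using amin_prop(1)[OF assms(1-3), of a'] amin_prop(2)[OF assms(1-3) s(1), of a'] unfolding s'_def by auto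
    have "g s' \<le> (a - a') * (s' - s)" using s' unfolding g_def by (simp add: algebra_simps)
    also have "\<dots> \<le> \<bar>a' - a\<bar> * b"
    proof -
      have "\<bar>s' - s\<bar> \<le> b" using s s' by auto
      hence "\<bar>(a - a') * (s' - s)\<bar> \<le> \<bar>a' - a\<bar> * b"
        by (simp add: abs_mult mult_left_mono abs_minus_commute)
      thus ?thesis by linarith
    qed
    finally show "g (amin b f a') \<le> \<bar>a' - a\<bar> * b" unfolding s'_def .
  qed
  show ?thesis
  proof (cases "K = {}")
    case True
    show ?thesis
    proof (intro exI[of _ 1] conjI allI impI)
      fix a' have "amin b f a' \<in> {0..b}" using amin_prop[OF assms(1-3)] by auto
      hence "\<not> e \<le> \<bar>amin b f a' - s\<bar>" using True unfolding K_def by blast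
      thus "\<bar>amin b f a' - amin b f a\<bar> < e" unfolding s_def by linarith
    qed simp
  next
    case False
    have "compact K" unfolding K_def
      by (intro compact_Int_closed compact_Icc closed_Collect_le continuous_intros)
    moreover have "continuous_on K g" unfolding g_def K_def
      by (intro continuous_intros continuous_on_subset[OF assms(2)]) auto
    ultimately obtain y0 where y0: "y0 \<in> K" "\<forall>y\<in>K. g y0 \<le> g y"
      using continuous_attains_inf[OF _ False] by blast
    have gpos: "g y0 > 0"
    proof (rule ccontr)
      assume "\<not> g y0 > 0"
      moreover have "y0 \<in> {0..b}" using y0(1) unfolding K_def by blast
      ultimately have "\<forall>y\<in>{0..b}. a*y0 - f y0 \<le> a*y - f y" using s(2) unfolding g_def
        by (smt (verit))
      hence "y0 = s" using amin_unique[OF assms(1-3)] y0(1) unfolding K_def s_def by auto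
      thus False using y0(1) assms(4) unfolding K_def by auto
    qed
    show ?thesis
    proof (intro exI[of _ "g y0 / (b+1)"] conjI allI impI)
      show "g y0 / (b+1) > 0" using gpos assms(1) by simp
    next
      fix a' assume a': "\<bar>a' - a\<bar> < g y0 / (b+1)"
      have "\<bar>a' - a\<bar> * b \<le> g y0 / (b+1) * b" using a' assms(1) by (intro mult_right_mono) auto
      also have "\<dots> < g y0" using gpos assms(1) by (simp add: field_simps)
      finally have lt: "g (amin b f a') < g y0" using key[of a'] by linarith
      show "\<bar>amin b f a' - amin b f a\<bar> < e"
      proof (rule ccontr)
        assume "\<not> ?thesis"
        hence "amin b f a' \<in> K" using amin_prop[OF assms(1-3), of a'] unfolding K_def s_def by auto
        hence "g y0 \<le> g (amin b f a')" using y0(2) by blast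
        thus False using lt by linarith
      qed
    qed
  qed
qed

definition mval :: "real \<Rightarrow> (real \<Rightarrow> real) \<Rightarrow> real \<Rightarrow> real" where
  "mval b f a = a * amin b f a - f (amin b f a)"

lemma mval_lip:
  assumes "b > 0" "continuous_on {0..b} f" "strict_concave_on {0..b} f"
  shows "mval b f a \<le> mval b f a' + \<bar>a - a'\<bar> * b"
proof -
  define s' where "s' = amin b f a'"
  have s': "s' \<in> {0..b}" using amin_prop[OF assms] unfolding s'_def by auto
  have "mval b f a \<le> a * s' - f s'" unfolding mval_def using amin_prop(2)[OF assms s'] .
  also have "\<dots> = mval b f a' + (a - a') * s'" unfolding mval_def s'_def by (simp add: algebra_simps)
  also have "\<dots> \<le> mval b f a' + \<bar>a - a'\<bar> * b"
  proof -
    have "(a - a') * s' \<le> \<bar>a - a'\<bar> * s'" using s' by (intro mult_right_mono) auto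
    also have "\<dots> \<le> \<bar>a - a'\<bar> * b" using s' by (intro mult_left_mono) auto
    finally have "(a - a') * s' \<le> \<bar>a - a'\<bar> * b" .
    thus ?thesis by simp
  qed
  finally show ?thesis .
qed

lemma mval_cont:
  assumes "b > 0" "continuous_on {0..b} f" "strict_concave_on {0..b} f"
  shows "continuous_on UNIV (mval b f)"
proof (rule lipschitz_on_continuous_on)
  show "b-lipschitz_on UNIV (mval b f)"
  proof (rule lipschitz_onI)
    fix x y
    show "dist (mval b f x) (mval b f y) \<le> b * dist x y"
      using mval_lip[OF assms, of x y] mval_lip[OF assms, of y x]
      by (simp add: dist_real_def abs_minus_commute mult.commute abs_le_iff)
  qed (use assms in auto)
qed



lemma beta_ge:
  assumes "cj > 0" "T > 0" "0 \<le> mu" "mu < T" "q \<ge> 0"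
  shows "mu * q + cj * ln (1 - mu / T) \<le> beta cj (T * q)"
proof (cases "T * q \<le> cj")
  case True
  have "mu * q \<le> mu * (cj / T)" using True assms by (intro mult_left_mono) (auto simp: field_simps)
  moreover have "ln (1 - mu / T) \<le> - (mu / T)" using ln_le_minus_one[of "1 - mu/T"] assms by (simp add: field_simps)
  hence "cj * ln (1 - mu / T) \<le> cj * (- (mu / T))" using assms(1) by (intro mult_left_mono) auto
  ultimately show ?thesis using True unfolding beta_def by (simp add: field_simps)
next
  case False
  have qp: "q > 0" using False assms by (metis mult_eq_0_iff not_less_iff_gr_or_eq order_le_less)
  define y where "y = (1 - mu/T) * T * q / cj"
  have y: "y > 0" unfolding y_def using assms False qp by (auto simp: field_simps)
  have "ln y \<le> y - 1" using ln_le_minus_one[OF y] .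
  hence "cj * ln y \<le> cj * (y - 1)" using assms(1) by (intro mult_left_mono) auto
  moreover have "ln y = ln (1 - mu/T) + ln (T * q / cj)"
  proof -
    have yeq: "y = (1 - mu/T) * (T * q / cj)" unfolding y_def by simp
    have p1: "1 - mu/T > 0" and p2: "T * q / cj > 0" using assms qp by (auto simp: field_simps)
    show ?thesis unfolding yeq by (rule ln_mult_pos[OF p1 p2])
  qed
  moreover have "cj * (y - 1) = T * q - mu * q - cj" unfolding y_def using assms by (simp add: field_simps)
  ultimately have "cj * ln (1 - mu/T) + cj * ln (T * q / cj) \<le> T * q - mu * q - cj"
    by (simp add: distrib_left)
  moreover have "beta cj (T * q) = T * q - cj - cj * ln (T * q / cj)" using False unfolding beta_def by simp
  ultimately show ?thesis by linarith
qed

lemma beta_eq_pos: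
  assumes "cj > 0" "T > 0" "0 < mu" "mu < T" "q = cj / (T - mu)"
  shows "beta cj (T * q) = mu * q + cj * ln (1 - mu / T)"
proof -
  have qp: "q > 0" using assms by simp
  have gt: "T * q > cj" using assms qp by (simp add: field_simps)
  have "ln (T * q / cj) = - ln (1 - mu / T)"
  proof -
    have "T * q / cj = inverse (1 - mu / T)" using assms by (simp add: field_simps)
    thus ?thesis using assms by (simp add: ln_inverse)
  qed
  moreover have "T * q - cj = mu * q" using assms by (simp add: field_simps)
  ultimately show ?thesis using gt unfolding beta_def by simp
qed

lemma beta_eq_zero:
  assumes "cj > 0" "T > 0" "T * q \<le> cj"
  shows "beta cj (T * q) = 0 * q + cj * ln (1 - 0 / T)"
  using assms unfolding beta_def by simp

lemma gibbs_term:
  assumes "r > 0" "x \<ge> 0" "Z > 0" "\<epsilon> > 0"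
  shows "\<epsilon> * (x - r * exp (- a / \<epsilon>) / Z) - \<epsilon> * x * ln Z \<le> a * x + \<epsilon> * xlogx x r"
proof (cases "x = 0")
  case True
  thus ?thesis using assms by (simp add: xlogx_def)
next
  case False
  hence xp: "x > 0" using assms by simp
  define w where "w = exp (- a / \<epsilon>)"
  have wp: "w > 0" unfolding w_def by simp
  have lw: "ln w = - a / \<epsilon>" unfolding w_def by simp
  define y where "y = x * Z / (r * w)"
  have yp: "y > 0" unfolding y_def using xp assms wp by simp
  have "ln (1/y) \<le> 1/y - 1" using ln_le_minus_one[of "1/y"] yp by simp
  hence ly: "1 - 1/y \<le> ln y" using yp by (simp add: ln_div)
  have "ln y = ln x + ln Z - ln r - ln w" unfolding y_def using xp assms wp
    by (simp add: ln_div ln_mult)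
  hence "\<epsilon> * x * ln y = \<epsilon> * x * (ln x + ln Z - ln r - ln w)" by simp
  also have "\<dots> = \<epsilon> * x * ln x + \<epsilon> * x * ln Z - \<epsilon> * x * ln r - x * (\<epsilon> * ln w)"
    by (simp add: algebra_simps)
  also have "x * (\<epsilon> * ln w) = - a * x" using lw assms by simp
  finally have e1: "\<epsilon> * x * ln y = \<epsilon> * x * ln x + \<epsilon> * x * ln Z - \<epsilon> * x * ln r + a * x" by simp
  have "xlogx x r = x * ln x - x * ln r" unfolding xlogx_def using False xp assms
    by (simp add: ln_div algebra_simps)
  hence "\<epsilon> * xlogx x r = \<epsilon> * (x * ln x - x * ln r)" by simp
  hence "\<epsilon> * xlogx x r = \<epsilon> * x * ln x - \<epsilon> * x * ln r" by (simp add: algebra_simps)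
  hence eq: "a * x + \<epsilon> * xlogx x r + \<epsilon> * x * ln Z = \<epsilon> * x * ln y"
    using e1 by linarith
  have "\<epsilon> * x * (1 - 1/y) \<le> \<epsilon> * x * ln y" using ly xp assms by (intro mult_left_mono) auto
  moreover have "\<epsilon> * x * (1 - 1/y) = \<epsilon> * (x - r * w / Z)" unfolding y_def using xp assms wp
    by (simp add: field_simps)
  ultimately show ?thesis using eq unfolding w_def by linarith
qed

lemma gibbs_ge:
  fixes a x :: "nat \<Rightarrow> real"
  assumes "\<epsilon> > 0" "n \<ge> 1" "\<forall>j<n. x j \<ge> 0" "(\<Sum>j<n. x j) = r"
  shows "- \<epsilon> * r * ln (\<Sum>j<n. exp (- a j / \<epsilon>)) \<le> (\<Sum>j<n. a j * x j + \<epsilon> * xlogx (x j) r)"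
proof -
  define Z where "Z = (\<Sum>j<n. exp (- a j / \<epsilon>))"
  have Zp: "Z > 0" unfolding Z_def using assms(2) by (intro sum_pos) (auto simp: lessThan_empty_iff)
  have r0: "r \<ge> 0" using assms(3,4) sum_nonneg[of "{..<n}" x] by auto
  show ?thesis
  proof (cases "r = 0")
    case True
    hence "\<forall>j<n. x j = 0" using assms(3,4) sum_nonneg_eq_0_iff[of "{..<n}" x] by auto
    thus ?thesis using True by (simp add: xlogx_def)
  next
    case False
    hence rp: "r > 0" using r0 by simp
    have "(\<Sum>j<n. \<epsilon> * (x j - r * exp (- a j / \<epsilon>) / Z) - \<epsilon> * x j * ln Z)
          \<le> (\<Sum>j<n. a j * x j + \<epsilon> * xlogx (x j) r)"
      by (intro sum_mono gibbs_term rp Zp assms(1)) (use assms(3) in auto)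
    moreover have "(\<Sum>j<n. \<epsilon> * (x j - r * exp (- a j / \<epsilon>) / Z) - \<epsilon> * x j * ln Z)
        = \<epsilon> * ((\<Sum>j<n. x j) - r * (\<Sum>j<n. exp (- a j / \<epsilon>)) / Z) - \<epsilon> * (\<Sum>j<n. x j) * ln Z"
      by (simp add: sum_subtractf sum_distrib_left sum_distrib_right sum_divide_distrib right_diff_distrib)
    moreover have "\<dots> = - \<epsilon> * r * ln Z" using assms(4) Zp unfolding Z_def by simp
    ultimately show ?thesis unfolding Z_def by simp
  qed
qed

lemma gibbs_eq:
  fixes a :: "nat \<Rightarrow> real"
  assumes "\<epsilon> > 0" "n \<ge> 1" "r \<ge> 0"
  defines "Z \<equiv> (\<Sum>j<n. exp (- a j / \<epsilon>))"
  shows "(\<Sum>j<n. a j * (r * exp (- a j / \<epsilon>) / Z) + \<epsilon> * xlogx (r * exp (- a j / \<epsilon>) / Z) r)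
         = - \<epsilon> * r * ln Z"
proof (cases "r = 0")
  case True thus ?thesis by (simp add: xlogx_def)
next
  case False
  hence rp: "r > 0" using assms by simp
  have Zp: "Z > 0" unfolding Z_def using assms(2) by (intro sum_pos) (auto simp: lessThan_empty_iff)
  have "\<And>j. a j * (r * exp (- a j / \<epsilon>) / Z) + \<epsilon> * xlogx (r * exp (- a j / \<epsilon>) / Z) r
        = - \<epsilon> * ln Z * (r * exp (- a j / \<epsilon>) / Z)"
  proof -
    fix j
    define w where "w = exp (- a j / \<epsilon>)"
    have wp: "w > 0" unfolding w_def by simp
    have "r * w / Z / r = w / Z" using rp by simp
    hence "ln (r * w / Z / r) = ln w - ln Z" using wp Zp by (simp add: ln_div)
    also have "ln w = - a j / \<epsilon>" unfolding w_def by simp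
    finally have l: "ln (r * w / Z / r) = - a j / \<epsilon> - ln Z" .
    have "xlogx (r * w / Z) r = (r * w / Z) * (- a j / \<epsilon> - ln Z)"
      unfolding xlogx_def using l rp wp Zp by simp
    hence "a j * (r * w / Z) + \<epsilon> * xlogx (r * w / Z) r = a j * (r * w / Z) + \<epsilon> * ((r * w / Z) * (- a j / \<epsilon> - ln Z))"
      by simp
    also have "\<dots> = - \<epsilon> * ln Z * (r * w / Z)" using assms(1) Zp by (simp add: field_simps)
    finally show "a j * (r * exp (- a j / \<epsilon>) / Z) + \<epsilon> * xlogx (r * exp (- a j / \<epsilon>) / Z) r
        = - \<epsilon> * ln Z * (r * exp (- a j / \<epsilon>) / Z)" unfolding w_def .
  qed
  hence "(\<Sum>j<n. a j * (r * exp (- a j / \<epsilon>) / Z) + \<epsilon> * xlogx (r * exp (- a j / \<epsilon>) / Z) r)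
        = (\<Sum>j<n. - \<epsilon> * ln Z * (r * exp (- a j / \<epsilon>) / Z))" by simp
  also have "\<dots> = (\<Sum>j<n. (- \<epsilon> * ln Z * r / Z) * exp (- a j / \<epsilon>))"
    by (rule sum.cong) (simp_all add: field_simps)
  also have "\<dots> = (- \<epsilon> * ln Z * r / Z) * Z" unfolding Z_def by (rule sum_distrib_left[symmetric])
  also have "\<dots> = - \<epsilon> * ln Z * (r * Z / Z)" by simp
  also have "\<dots> = - \<epsilon> * r * ln Z" using Zp by simp
  finally show ?thesis .
qed

lemma lse_convex:
  fixes a b :: "nat \<Rightarrow> real"
  assumes "n \<ge> 1" "0 \<le> t" "t \<le> 1"
  shows "ln (\<Sum>j<n. exp ((1 - t) * a j + t * b j))
         \<le> (1 - t) * ln (\<Sum>j<n. exp (a j)) + t * ln (\<Sum>j<n. exp (b j))"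
proof -
  define A where "A = ln (\<Sum>j<n. exp (a j))"
  define B where "B = ln (\<Sum>j<n. exp (b j))"
  have SA: "(\<Sum>j<n. exp (a j)) = exp A" unfolding A_def using assms(1)
    by (subst exp_ln) (auto intro!: sum_pos simp: lessThan_empty_iff)
  have SB: "(\<Sum>j<n. exp (b j)) = exp B" unfolding B_def using assms(1)
    by (subst exp_ln) (auto intro!: sum_pos simp: lessThan_empty_iff)
  have "\<And>j. exp ((1 - t) * a j + t * b j)
      \<le> ((1 - t) * exp (a j - A) + t * exp (b j - B)) * exp ((1 - t) * A + t * B)"
  proof -
    fix j
    have "exp ((1 - t) * (a j - A) + t * (b j - B)) \<le> (1 - t) * exp (a j - A) + t * exp (b j - B)"
      using convex_onD[OF exp_convex, of t "a j - A" "b j - B"] assms by simp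
    moreover have "exp ((1 - t) * a j + t * b j) = exp ((1 - t) * (a j - A) + t * (b j - B)) * exp ((1 - t) * A + t * B)"
      unfolding mult_exp_exp by (rule arg_cong[where f=exp]) (simp add: algebra_simps)
    ultimately show "exp ((1 - t) * a j + t * b j)
      \<le> ((1 - t) * exp (a j - A) + t * exp (b j - B)) * exp ((1 - t) * A + t * B)"
      by (simp add: mult_right_mono)
  qed
  hence "(\<Sum>j<n. exp ((1 - t) * a j + t * b j))
     \<le> (\<Sum>j<n. ((1 - t) * exp (a j - A) + t * exp (b j - B)) * exp ((1 - t) * A + t * B))"
    by (intro sum_mono) auto
  also have "\<dots> = exp ((1 - t) * A + t * B)"
  proof -
    have s1: "(\<Sum>j<n. ((1 - t) * exp (a j - A) + t * exp (b j - B)) * exp ((1 - t) * A + t * B))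
       = (\<Sum>j<n. ((1 - t) * exp (a j - A) + t * exp (b j - B))) * exp ((1 - t) * A + t * B)"
      by (rule sum_distrib_right[symmetric])
    have s2: "(\<Sum>j<n. ((1 - t) * exp (a j - A) + t * exp (b j - B)))
       = (\<Sum>j<n. (1 - t) * exp (a j - A)) + (\<Sum>j<n. t * exp (b j - B))" by (rule sum.distrib)
    have s3: "(\<Sum>j<n. (1 - t) * exp (a j - A)) = (1 - t) * ((\<Sum>j<n. exp (a j)) / exp A)"
      by (simp add: exp_diff sum_distrib_left sum_divide_distrib)
    have s4: "(\<Sum>j<n. t * exp (b j - B)) = t * ((\<Sum>j<n. exp (b j)) / exp B)"
      by (simp add: exp_diff sum_distrib_left sum_divide_distrib)
    show ?thesis unfolding s1 s2 s3 s4 SA SB by simp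
  qed
  finally have le: "(\<Sum>j<n. exp ((1 - t) * a j + t * b j)) \<le> exp ((1 - t) * A + t * B)" .
  have pos: "(\<Sum>j<n. exp ((1 - t) * a j + t * b j)) > 0" using assms(1) by (intro sum_pos) (auto simp: lessThan_empty_iff)
  show ?thesis using ln_le_cancel_iff[of "(\<Sum>j<n. exp ((1 - t) * a j + t * b j))" "exp ((1 - t) * A + t * B)"] le pos
    unfolding A_def[symmetric] B_def[symmetric] by simp
qed

lemma ln_strict_mid:
  fixes x y :: real
  assumes "x > 0" "y > 0" "x \<noteq> y"
  shows "(ln x + ln y) / 2 < ln ((x + y) / 2)"
proof -
  have "x * y < ((x + y) / 2)^2"
  proof -
    have "0 < (x - y)^2" using assms by simp
    thus ?thesis by (simp add: power2_eq_square field_simps)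
  qed
  hence "ln (x * y) < ln (((x + y) / 2)^2)" using assms by simp
  thus ?thesis using assms by (simp add: ln_mult ln_realpow)
qed

lemma phi_lip:
  assumes "\<epsilon> > 0" "n \<ge> 1" "\<forall>j<n. \<mu> j \<le> \<nu> j + d"
  shows "phi n \<epsilon> \<kappa> i \<mu> \<le> phi n \<epsilon> \<kappa> i \<nu> + d"
proof -
  define A where "A = (\<Sum>j<n. exp (- (\<kappa> i j + \<nu> j) / \<epsilon>))"
  define B where "B = (\<Sum>j<n. exp (- (\<kappa> i j + \<mu> j) / \<epsilon>))"
  have AB: "A * exp (- d / \<epsilon>) \<le> B"
    unfolding A_def B_def sum_distrib_right
  proof (intro sum_mono)
    fix j assume "j \<in> {..<n}"
    hence "\<mu> j \<le> \<nu> j + d" using assms by auto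
    hence "- (\<kappa> i j + \<nu> j) - d \<le> - (\<kappa> i j + \<mu> j)" by linarith
    hence le: "(- (\<kappa> i j + \<nu> j) - d) / \<epsilon> \<le> - (\<kappa> i j + \<mu> j) / \<epsilon>"
      using assms(1) by (intro divide_right_mono) auto
    have "exp (- (\<kappa> i j + \<nu> j) / \<epsilon>) * exp (- d / \<epsilon>) = exp ((- (\<kappa> i j + \<nu> j) - d) / \<epsilon>)"
      unfolding mult_exp_exp by (rule arg_cong[where f=exp]) (simp add: diff_divide_distrib)
    also have "\<dots> \<le> exp (- (\<kappa> i j + \<mu> j) / \<epsilon>)" using le by simp
    finally show "exp (- (\<kappa> i j + \<nu> j) / \<epsilon>) * exp (- d / \<epsilon>) \<le> exp (- (\<kappa> i j + \<mu> j) / \<epsilon>)" .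
  qed
  have Ap: "A > 0" unfolding A_def using assms(2) by (intro sum_pos) (auto simp: lessThan_empty_iff)
  have AE: "A * exp (- d / \<epsilon>) > 0" using Ap by simp
  have Bp: "B > 0" using AE AB by linarith
  have "ln (A * exp (- d / \<epsilon>)) \<le> ln B" using AB AE Bp by (subst ln_le_cancel_iff) auto
  moreover have "ln (A * exp (- d / \<epsilon>)) = ln A + - d / \<epsilon>" using Ap by (simp add: ln_mult_pos)
  ultimately have "ln A + - d / \<epsilon> \<le> ln B" by simp
  hence "\<epsilon> * (ln A + - d / \<epsilon>) \<le> \<epsilon> * ln B" using assms(1) by (intro mult_left_mono) auto
  moreover have "\<epsilon> * (ln A + - d / \<epsilon>) = \<epsilon> * ln A - d" using assms(1) by (simp add: field_simps)
  ultimately have "\<epsilon> * ln A - d \<le> \<epsilon> * ln B" by linarith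
  thus ?thesis unfolding phi_def A_def B_def by simp
qed

lemma deriv_g:
  fixes S k \<epsilon> t :: real
  assumes "S \<ge> 0" "\<epsilon> > 0"
  shows "((\<lambda>t. - \<epsilon> * ln (S + exp (- (k + t) / \<epsilon>))) has_real_derivative
           (exp (- (k + t) / \<epsilon>) / (S + exp (- (k + t) / \<epsilon>)))) (at t)"
proof -
  have p: "S + exp (- (k + t) / \<epsilon>) > 0" using assms(1) by (simp add: add_nonneg_pos)
  have d1: "((\<lambda>t. - (k + t) / \<epsilon>) has_real_derivative (- 1 / \<epsilon>)) (at t)"
    using DERIV_cdivide[OF DERIV_minus[OF DERIV_add[OF DERIV_const[of k] DERIV_ident]], of \<epsilon>] by simp
  have d2: "((\<lambda>t. exp (- (k + t) / \<epsilon>)) has_real_derivative (exp (- (k + t) / \<epsilon>) * (- 1 / \<epsilon>))) (at t)"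
    by (rule DERIV_fun_exp[OF d1])
  have d3: "((\<lambda>t. S + exp (- (k + t) / \<epsilon>)) has_real_derivative (0 + exp (- (k + t) / \<epsilon>) * (- 1 / \<epsilon>))) (at t)"
    by (rule DERIV_add[OF DERIV_const d2])
  have d4: "((\<lambda>t. ln (S + exp (- (k + t) / \<epsilon>))) has_real_derivative
      (inverse (S + exp (- (k + t) / \<epsilon>)) * (0 + exp (- (k + t) / \<epsilon>) * (- 1 / \<epsilon>)))) (at t)"
    by (rule DERIV_ln[THEN DERIV_chain2, OF p d3])
  note d5 = DERIV_cmult[OF d4, of "- \<epsilon>"]
  have eqv: "- \<epsilon> * (inverse (S + exp (- (k + t) / \<epsilon>)) * (0 + exp (- (k + t) / \<epsilon>) * (- 1 / \<epsilon>)))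
     = exp (- (k + t) / \<epsilon>) / (S + exp (- (k + t) / \<epsilon>))"
  proof -
    have gen: "\<And>X E :: real. - \<epsilon> * (inverse X * (0 + E * (- 1 / \<epsilon>))) = E / X"
      using assms(2) by (simp add: field_simps)
    show ?thesis by (rule gen)
  qed
  show ?thesis using d5 unfolding eqv .
qed

lemma deriv_h:
  fixes c T t :: real
  assumes "t < T" "T > 0"
  shows "((\<lambda>t. c * ln (1 - t / T)) has_real_derivative (- c / (T - t))) (at t)"
proof -
  have p: "1 - t / T > 0" using assms by (simp add: field_simps)
  have d1: "((\<lambda>t. 1 - t / T) has_real_derivative (0 - 1 / T)) (at t)"
    by (rule DERIV_diff[OF DERIV_const DERIV_cdivide[OF DERIV_ident]])
  have d2: "((\<lambda>t. ln (1 - t / T)) has_real_derivative (inverse (1 - t / T) * (0 - 1 / T))) (at t)"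
    by (rule DERIV_ln[THEN DERIV_chain2, OF p d1])
  note d3 = DERIV_cmult[OF d2, of c]
  have "c * (inverse (1 - t / T) * (0 - 1 / T)) = - c / (T - t)"
    using assms p by (simp add: field_simps)
  thus ?thesis using d3 by simp
qed

lemma mixval:
  fixes t T a b :: real
  assumes a: "0 \<le> a" "a < T" "0 \<le> b" "b < T" and t: "0 \<le> t" "t \<le> 1"
  shows "(1 - t) * a + t * b \<in> {0..<T}"
proof -
  have t1: "0 \<le> 1 - t" using t by simp
  have n1: "0 \<le> (1 - t) * a" "0 \<le> t * b"
    using a t1 t by (simp_all add: mult_nonneg_nonneg)
  have eq: "(1 - t) * a + t * b - T = (1 - t) * (a - T) + t * (b - T)"
    by (simp add: algebra_simps)
  have "(1 - t) * (a - T) + t * (b - T) < 0"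
  proof (cases "t = 1")
    case True thus ?thesis using a by simp
  next
    case False
    hence "0 < 1 - t" using t by simp
    hence "(1 - t) * (a - T) < 0" using a by (simp add: mult_pos_neg)
    moreover have "t * (b - T) \<le> 0" using a t by (simp add: mult_nonneg_nonpos)
    ultimately show ?thesis by linarith
  qed
  hence "(1 - t) * a + t * b < T" using eq by linarith
  thus ?thesis using n1 by simp
qed



locale P5 =
  fixes n m :: nat and c rbar :: "nat \<Rightarrow> real" and T \<epsilon> :: real
    and \<kappa> :: "nat \<Rightarrow> nat \<Rightarrow> real" and U :: "nat \<Rightarrow> real \<Rightarrow> real"
  assumes n1: "n \<ge> 1" and m1: "m \<ge> 1"
    and cpos: "\<And>j. j < n \<Longrightarrow> c j > 0" and Tpos: "T > 0" and epos: "\<epsilon> > 0"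
    and rbpos: "\<And>i. i < m \<Longrightarrow> rbar i > 0"
    and Ucont: "\<And>i. i < m \<Longrightarrow> continuous_on {0..rbar i} (U i)"
    and Uconc: "\<And>i. i < m \<Longrightarrow> strict_concave_on {0..rbar i} (U i)"
begin

abbreviation "RR \<equiv> (\<Pi>\<^sub>E i\<in>{..<m}. {0..rbar i})"
abbreviation "MM \<equiv> (\<Pi>\<^sub>E j\<in>{..<n}. {0..<T})"
abbreviation "WW \<equiv> W n m c T \<epsilon> \<kappa> U"
abbreviation "ph \<equiv> phi n \<epsilon> \<kappa>"

definition hh :: "(nat \<Rightarrow> real) \<Rightarrow> real" where
  "hh \<mu> = (\<Sum>j<n. c j * ln (1 - \<mu> j / T))"
definition rof :: "(nat \<Rightarrow> real) \<Rightarrow> nat \<Rightarrow> real" where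
  "rof \<mu> = (\<lambda>i\<in>{..<m}. amin (rbar i) (U i) (ph i \<mu>))"
definition DD :: "(nat \<Rightarrow> real) \<Rightarrow> real" where
  "DD \<mu> = WW (rof \<mu>) \<mu>"
definition mix :: "real \<Rightarrow> (nat \<Rightarrow> real) \<Rightarrow> (nat \<Rightarrow> real) \<Rightarrow> nat \<Rightarrow> real" where
  "mix t \<mu> \<nu> = (\<lambda>j\<in>{..<n}. (1 - t) * \<mu> j + t * \<nu> j)"

lemma W_eq: "WW r \<mu> = (\<Sum>i<m. r i * ph i \<mu> - U i (r i)) + hh \<mu>"
  unfolding W_def hh_def by simp

lemma rof_R: "rof \<mu> \<in> RR"
  unfolding rof_def using amin_prop(1)[OF rbpos Ucont Uconc] by auto

lemma rof_term:
  assumes "i < m" "y \<in> {0..rbar i}"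
  shows "rof \<mu> i * ph i \<mu> - U i (rof \<mu> i) \<le> y * ph i \<mu> - U i y"
proof -
  have r: "rof \<mu> i = amin (rbar i) (U i) (ph i \<mu>)" using assms(1) unfolding rof_def by simp
  have "ph i \<mu> * amin (rbar i) (U i) (ph i \<mu>) - U i (amin (rbar i) (U i) (ph i \<mu>)) \<le> ph i \<mu> * y - U i y"
    by (rule amin_prop(2)[OF rbpos[OF assms(1)] Ucont[OF assms(1)] Uconc[OF assms(1)] assms(2)])
  moreover have "ph i \<mu> * amin (rbar i) (U i) (ph i \<mu>) = amin (rbar i) (U i) (ph i \<mu>) * ph i \<mu>"
    "ph i \<mu> * y = y * ph i \<mu>" by (rule mult.commute)+
  ultimately show ?thesis unfolding r by linarith
qed

lemma rof_min: "r \<in> RR \<Longrightarrow> WW (rof \<mu>) \<mu> \<le> WW r \<mu>"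
  unfolding W_eq by (intro add_right_mono sum_mono rof_term) (auto simp: PiE_iff)

lemma rof_unique:
  assumes r: "r \<in> RR" and le: "WW r \<mu> \<le> WW (rof \<mu>) \<mu>"
  shows "r = rof \<mu>"
proof (rule PiE_ext[OF r])
  show "rof \<mu> \<in> RR" by (rule rof_R)
  fix i assume i: "i \<in> {..<m}"
  hence i': "i < m" by simp
  have ri: "r i \<in> {0..rbar i}" by (rule PiE_mem[OF r i])
  have rofi: "rof \<mu> i = amin (rbar i) (U i) (ph i \<mu>)" using i' unfolding rof_def by simp
  show "r i = rof \<mu> i"
  proof (rule ccontr)
    assume ne: "r i \<noteq> rof \<mu> i"
    have lt: "rof \<mu> i * ph i \<mu> - U i (rof \<mu> i) < r i * ph i \<mu> - U i (r i)"
    proof (rule ccontr)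
      assume "\<not> ?thesis"
      hence h1: "r i * ph i \<mu> - U i (r i) \<le> rof \<mu> i * ph i \<mu> - U i (rof \<mu> i)" by simp
      have "\<forall>y\<in>{0..rbar i}. ph i \<mu> * r i - U i (r i) \<le> ph i \<mu> * y - U i y"
      proof
        fix y assume y: "y \<in> {0..rbar i}"
        have "rof \<mu> i * ph i \<mu> - U i (rof \<mu> i) \<le> y * ph i \<mu> - U i y"
          by (rule rof_term[OF i' y])
        moreover have "ph i \<mu> * r i = r i * ph i \<mu>" "ph i \<mu> * y = y * ph i \<mu>" by (rule mult.commute)+
        ultimately show "ph i \<mu> * r i - U i (r i) \<le> ph i \<mu> * y - U i y" using h1 by linarith
      qed
      hence "r i = amin (rbar i) (U i) (ph i \<mu>)"
        by (rule amin_unique[OF rbpos[OF i'] Ucont[OF i'] Uconc[OF i'] ri])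
      thus False using ne rofi by simp
    qed
    have "(\<Sum>i<m. rof \<mu> i * ph i \<mu> - U i (rof \<mu> i)) < (\<Sum>i<m. r i * ph i \<mu> - U i (r i))"
    proof (rule sum_strict_mono_ex1)
      show "\<forall>x\<in>{..<m}. rof \<mu> x * ph x \<mu> - U x (rof \<mu> x) \<le> r x * ph x \<mu> - U x (r x)"
      proof
        fix x assume x: "x \<in> {..<m}"
        show "rof \<mu> x * ph x \<mu> - U x (rof \<mu> x) \<le> r x * ph x \<mu> - U x (r x)"
          using x by (intro rof_term PiE_mem[OF r]) auto
      qed
      show "\<exists>a\<in>{..<m}. rof \<mu> a * ph a \<mu> - U a (rof \<mu> a) < r a * ph a \<mu> - U a (r a)"
        using lt i by blast
    qed simp
    hence "WW (rof \<mu>) \<mu> < WW r \<mu>" unfolding W_eq by simp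
    thus False using le by simp
  qed
qed

lemma DD_eq: "DD \<mu> = (\<Sum>i<m. mval (rbar i) (U i) (ph i \<mu>)) + hh \<mu>"
  unfolding DD_def W_eq mval_def rof_def by (simp add: mult.commute)

lemma DD_le: "r \<in> RR \<Longrightarrow> DD \<mu> \<le> WW r \<mu>"
  unfolding DD_def by (rule rof_min)

lemma M_mem: "\<mu> \<in> MM \<Longrightarrow> j < n \<Longrightarrow> 0 \<le> \<mu> j \<and> \<mu> j < T"
proof -
  assume a: "\<mu> \<in> MM" "j < n"
  have "\<mu> j \<in> {0..<T}" using PiE_mem[OF a(1), of j] a(2) by simp
  thus ?thesis by simp
qed

lemma R_mem: "r \<in> RR \<Longrightarrow> i < m \<Longrightarrow> 0 \<le> r i \<and> r i \<le> rbar i"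
proof -
  assume a: "r \<in> RR" "i < m"
  have "r i \<in> {0..rbar i}" using PiE_mem[OF a(1), of i] a(2) by simp
  thus ?thesis by simp
qed

lemma mix_M:
  assumes "\<mu> \<in> MM" "\<nu> \<in> MM" "0 \<le> t" "t \<le> 1"
  shows "mix t \<mu> \<nu> \<in> MM"
  unfolding mix_def restrict_PiE_iff
proof
  fix j assume "j \<in> {..<n}"
  hence j: "j < n" by simp
  show "(1 - t) * \<mu> j + t * \<nu> j \<in> {0..<T}"
    using mixval[of "\<mu> j" T "\<nu> j" t] M_mem[OF assms(1) j] M_mem[OF assms(2) j] assms(3,4) by blast
qed

lemma ph_concave:
  assumes "0 \<le> t" "t \<le> 1"
  shows "(1 - t) * ph i \<mu> + t * ph i \<nu> \<le> ph i (mix t \<mu> \<nu>)"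
proof -
  have "(\<Sum>j<n. exp (- (\<kappa> i j + mix t \<mu> \<nu> j) / \<epsilon>))
      = (\<Sum>j<n. exp ((1 - t) * (- (\<kappa> i j + \<mu> j) / \<epsilon>) + t * (- (\<kappa> i j + \<nu> j) / \<epsilon>)))"
  proof (rule sum.cong)
    fix j assume j: "j \<in> {..<n}"
    have e1: "(1 - t) * (- (\<kappa> i j + \<mu> j) / \<epsilon>) + t * (- (\<kappa> i j + \<nu> j) / \<epsilon>)
       = ((1 - t) * (- (\<kappa> i j + \<mu> j)) + t * (- (\<kappa> i j + \<nu> j))) / \<epsilon>"
      by (simp add: add_divide_distrib)
    have e2: "(1 - t) * (- (\<kappa> i j + \<mu> j)) + t * (- (\<kappa> i j + \<nu> j)) = - (\<kappa> i j + ((1 - t) * \<mu> j + t * \<nu> j))"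
      by (simp add: algebra_simps)
    show "exp (- (\<kappa> i j + mix t \<mu> \<nu> j) / \<epsilon>)
      = exp ((1 - t) * (- (\<kappa> i j + \<mu> j) / \<epsilon>) + t * (- (\<kappa> i j + \<nu> j) / \<epsilon>))"
      unfolding e1 e2 using j by (simp add: mix_def)
  qed simp
  hence "ln (\<Sum>j<n. exp (- (\<kappa> i j + mix t \<mu> \<nu> j) / \<epsilon>))
      \<le> (1 - t) * ln (\<Sum>j<n. exp (- (\<kappa> i j + \<mu> j) / \<epsilon>)) + t * ln (\<Sum>j<n. exp (- (\<kappa> i j + \<nu> j) / \<epsilon>))"
    using lse_convex[OF n1 assms, of "\<lambda>j. - (\<kappa> i j + \<mu> j) / \<epsilon>" "\<lambda>j. - (\<kappa> i j + \<nu> j) / \<epsilon>"] by simp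
  hence "\<epsilon> * ((1 - t) * ln (\<Sum>j<n. exp (- (\<kappa> i j + \<mu> j) / \<epsilon>)) + t * ln (\<Sum>j<n. exp (- (\<kappa> i j + \<nu> j) / \<epsilon>)))
       \<ge> \<epsilon> * ln (\<Sum>j<n. exp (- (\<kappa> i j + mix t \<mu> \<nu> j) / \<epsilon>))"
    using epos by (intro mult_left_mono) auto
  thus ?thesis unfolding phi_def by (simp add: algebra_simps)
qed

lemma h_term_concave:
  assumes "j < n" "\<mu> \<in> MM" "\<nu> \<in> MM" "0 \<le> t" "t \<le> 1"
  shows "(1 - t) * (c j * ln (1 - \<mu> j / T)) + t * (c j * ln (1 - \<nu> j / T)) \<le> c j * ln (1 - mix t \<mu> \<nu> j / T)"
proof -
  have x: "1 - \<mu> j / T > 0" "1 - \<nu> j / T > 0"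
    using M_mem[OF assms(2,1)] M_mem[OF assms(3,1)] Tpos by (simp_all add: field_simps)
  have "1 - mix t \<mu> \<nu> j / T = (1 - t) *\<^sub>R (1 - \<mu> j / T) + t *\<^sub>R (1 - \<nu> j / T)"
    using assms(1) Tpos unfolding mix_def by (simp add: field_simps)
  hence "(1 - t) * ln (1 - \<mu> j / T) + t * ln (1 - \<nu> j / T) \<le> ln (1 - mix t \<mu> \<nu> j / T)"
    using concave_onD[OF ln_concave, of t "1 - \<mu> j / T" "1 - \<nu> j / T"] x assms by simp
  hence "c j * ((1 - t) * ln (1 - \<mu> j / T) + t * ln (1 - \<nu> j / T)) \<le> c j * ln (1 - mix t \<mu> \<nu> j / T)"
    using cpos[OF assms(1)] by (intro mult_left_mono) auto
  thus ?thesis by (simp add: algebra_simps)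
qed

lemma h_comb: "(1 - t) * hh \<mu> + t * hh \<nu> = (\<Sum>j<n. (1 - t) * (c j * ln (1 - \<mu> j / T)) + t * (c j * ln (1 - \<nu> j / T)))"
  unfolding hh_def by (simp add: sum.distrib sum_distrib_left)

lemma h_concave:
  assumes "\<mu> \<in> MM" "\<nu> \<in> MM" "0 \<le> t" "t \<le> 1"
  shows "(1 - t) * hh \<mu> + t * hh \<nu> \<le> hh (mix t \<mu> \<nu>)"
proof -
  have "(1 - t) * hh \<mu> + t * hh \<nu> = (\<Sum>j<n. (1 - t) * (c j * ln (1 - \<mu> j / T)) + t * (c j * ln (1 - \<nu> j / T)))"
    unfolding hh_def by (simp add: sum.distrib sum_distrib_left)
  also have "\<dots> \<le> hh (mix t \<mu> \<nu>)" unfolding hh_def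
    by (intro sum_mono h_term_concave assms) auto
  finally show ?thesis .
qed

lemma h_strict:
  assumes "\<mu> \<in> MM" "\<nu> \<in> MM" "\<mu> \<noteq> \<nu>"
  shows "(hh \<mu> + hh \<nu>) / 2 < hh (mix (1/2) \<mu> \<nu>)"
proof -
  have "\<not> (\<forall>j\<in>{..<n}. \<mu> j = \<nu> j)" using PiE_ext[OF assms(1,2)] assms(3) by blast
  then obtain j where j: "j < n" "\<mu> j \<noteq> \<nu> j" by blast
  have "(hh \<mu> + hh \<nu>) / 2 = (1 - 1/2) * hh \<mu> + (1/2) * hh \<nu>" by simp
  also have "\<dots> = (\<Sum>j<n. (1 - 1/2) * (c j * ln (1 - \<mu> j / T)) + (1/2) * (c j * ln (1 - \<nu> j / T)))"
    by (rule h_comb)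
  also have "\<dots> < hh (mix (1/2) \<mu> \<nu>)" unfolding hh_def
  proof (rule sum_strict_mono_ex1)
    show "\<forall>j\<in>{..<n}. (1 - 1/2) * (c j * ln (1 - \<mu> j / T)) + (1/2) * (c j * ln (1 - \<nu> j / T))
        \<le> c j * ln (1 - mix (1/2) \<mu> \<nu> j / T)"
    proof
      fix j assume "j \<in> {..<n}"
      thus "(1 - 1/2) * (c j * ln (1 - \<mu> j / T)) + (1/2) * (c j * ln (1 - \<nu> j / T))
        \<le> c j * ln (1 - mix (1/2) \<mu> \<nu> j / T)"
        by (intro h_term_concave[OF _ assms(1,2)]) auto
    qed
    have x: "1 - \<mu> j / T > 0" "1 - \<nu> j / T > 0" "1 - \<mu> j / T \<noteq> 1 - \<nu> j / T"
      using M_mem[OF assms(1) j(1)] M_mem[OF assms(2) j(1)] j(2) Tpos by (simp_all add: field_simps)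
    have lt: "(ln (1 - \<mu> j / T) + ln (1 - \<nu> j / T)) / 2 < ln (((1 - \<mu> j / T) + (1 - \<nu> j / T)) / 2)"
      by (rule ln_strict_mid[OF x])
    have eq: "((1 - \<mu> j / T) + (1 - \<nu> j / T)) / 2 = 1 - mix (1/2) \<mu> \<nu> j / T"
      using j Tpos unfolding mix_def by (simp add: field_simps)
    have "c j * ((ln (1 - \<mu> j / T) + ln (1 - \<nu> j / T)) / 2) < c j * ln (1 - mix (1/2) \<mu> \<nu> j / T)"
      using lt unfolding eq by (rule mult_strict_left_mono) (rule cpos[OF j(1)])
    thus "\<exists>j\<in>{..<n}. (1 - 1/2) * (c j * ln (1 - \<mu> j / T)) + (1/2) * (c j * ln (1 - \<nu> j / T))
        < c j * ln (1 - mix (1/2) \<mu> \<nu> j / T)"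
      using j by (intro bexI[of _ j]) (auto simp: algebra_simps)
  qed simp
  finally show ?thesis .
qed

lemma sumpart_concave:
  assumes "r \<in> RR" "0 \<le> t" "t \<le> 1"
  shows "(1 - t) * (\<Sum>i<m. r i * ph i \<mu> - U i (r i)) + t * (\<Sum>i<m. r i * ph i \<nu> - U i (r i))
         \<le> (\<Sum>i<m. r i * ph i (mix t \<mu> \<nu>) - U i (r i))"
proof -
  have "(1 - t) * (\<Sum>i<m. r i * ph i \<mu> - U i (r i)) + t * (\<Sum>i<m. r i * ph i \<nu> - U i (r i))
     = (\<Sum>i<m. r i * ((1 - t) * ph i \<mu> + t * ph i \<nu>) - U i (r i))"
  proof -
    have "(1 - t) * (\<Sum>i<m. r i * ph i \<mu> - U i (r i)) + t * (\<Sum>i<m. r i * ph i \<nu> - U i (r i))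
      = (\<Sum>i<m. (1 - t) * (r i * ph i \<mu> - U i (r i)) + t * (r i * ph i \<nu> - U i (r i)))"
      by (simp only: sum_distrib_left sum.distrib)
    also have "\<dots> = (\<Sum>i<m. r i * ((1 - t) * ph i \<mu> + t * ph i \<nu>) - U i (r i))"
      by (rule sum.cong) (simp_all add: algebra_simps)
    finally show ?thesis .
  qed
  also have "\<dots> \<le> (\<Sum>i<m. r i * ph i (mix t \<mu> \<nu>) - U i (r i))"
  proof (intro sum_mono diff_right_mono mult_left_mono ph_concave assms(2,3))
    fix i assume "i \<in> {..<m}" thus "0 \<le> r i" using R_mem[OF assms(1)] by simp
  qed
  finally show ?thesis .
qed

lemma W_concave:
  assumes "r \<in> RR" "\<mu> \<in> MM" "\<nu> \<in> MM" "0 \<le> t" "t \<le> 1"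
  shows "(1 - t) * WW r \<mu> + t * WW r \<nu> \<le> WW r (mix t \<mu> \<nu>)"
  using sumpart_concave[OF assms(1,4,5), of \<mu> \<nu>] h_concave[OF assms(2-5)]
  unfolding W_eq by (simp add: algebra_simps)

lemma W_strict:
  assumes "r \<in> RR" "\<mu> \<in> MM" "\<nu> \<in> MM" "\<mu> \<noteq> \<nu>"
  shows "(WW r \<mu> + WW r \<nu>) / 2 < WW r (mix (1/2) \<mu> \<nu>)"
  using sumpart_concave[OF assms(1), of "1/2" \<mu> \<nu>] h_strict[OF assms(2-4)]
  unfolding W_eq by (simp add: algebra_simps)

end



lemma sum_upd:
  fixes g :: "nat \<Rightarrow> real \<Rightarrow> real"
  assumes "j < n"
  shows "(\<Sum>k<n. g k ((f(j := t)) k)) = (\<Sum>k\<in>{..<n}-{j}. g k (f k)) + g j t"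
proof -
  have "(\<Sum>k<n. g k ((f(j := t)) k)) = g j ((f(j := t)) j) + (\<Sum>k\<in>{..<n}-{j}. g k ((f(j := t)) k))"
    by (rule sum.remove) (use assms in auto)
  also have "(\<Sum>k\<in>{..<n}-{j}. g k ((f(j := t)) k)) = (\<Sum>k\<in>{..<n}-{j}. g k (f k))"
    by (rule sum.cong) auto
  finally show ?thesis by simp
qed

context P5 begin

definition Zf :: "nat \<Rightarrow> (nat \<Rightarrow> real) \<Rightarrow> real" where
  "Zf i \<mu> = (\<Sum>j<n. exp (- (\<kappa> i j + \<mu> j) / \<epsilon>))"
definition xs :: "(nat \<Rightarrow> real) \<Rightarrow> (nat \<Rightarrow> real) \<Rightarrow> nat \<Rightarrow> nat \<Rightarrow> real" where
  "xs r \<mu> i j = r i * exp (- (\<kappa> i j + \<mu> j) / \<epsilon>) / Zf i \<mu>"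

lemma Zf_pos: "Zf i \<mu> > 0"
  unfolding Zf_def using n1 by (intro sum_pos) (auto simp: lessThan_empty_iff)

lemma cost_split:
  "cost n m c T \<epsilon> \<kappa> r x = (\<Sum>i<m. \<Sum>j<n. (\<kappa> i j + \<mu> j) * x i j + \<epsilon> * xlogx (x i j) (r i)) + hh \<mu>
     + (\<Sum>j<n. beta (c j) (T * (\<Sum>i<m. x i j)) - (\<mu> j * (\<Sum>i<m. x i j) + c j * ln (1 - \<mu> j / T)))"
proof -
  have e1: "(\<Sum>i<m. \<Sum>j<n. (\<kappa> i j + \<mu> j) * x i j + \<epsilon> * xlogx (x i j) (r i))
     = (\<Sum>i<m. \<Sum>j<n. \<kappa> i j * x i j) + (\<Sum>i<m. \<Sum>j<n. \<mu> j * x i j) + \<epsilon> * (\<Sum>i<m. \<Sum>j<n. xlogx (x i j) (r i))"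
    by (simp add: sum.distrib distrib_right sum_distrib_left)
  have e2: "(\<Sum>i<m. \<Sum>j<n. \<mu> j * x i j) = (\<Sum>j<n. \<mu> j * (\<Sum>i<m. x i j))"
    by (simp add: sum_distrib_left) (rule sum.swap)
  have e3: "(\<Sum>j<n. beta (c j) (T * (\<Sum>i<m. x i j)) - (\<mu> j * (\<Sum>i<m. x i j) + c j * ln (1 - \<mu> j / T)))
     = (\<Sum>j<n. beta (c j) (T * (\<Sum>i<m. x i j))) - (\<Sum>j<n. \<mu> j * (\<Sum>i<m. x i j)) - hh \<mu>"
    unfolding hh_def by (simp add: sum_subtractf sum.distrib)
  show ?thesis unfolding cost_def e1 e2 e3 by simp
qed

lemma r_ph: "r i * ph i \<mu> = - \<epsilon> * r i * ln (Zf i \<mu>)"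
  unfolding phi_def Zf_def by simp

lemma weak_dual:
  assumes r: "r \<in> RR" and mu: "\<mu> \<in> MM" and x: "feasible n m r x"
  shows "(\<Sum>i<m. r i * ph i \<mu>) + hh \<mu> \<le> cost n m c T \<epsilon> \<kappa> r x"
proof -
  have xnn: "\<And>i j. i < m \<Longrightarrow> j < n \<Longrightarrow> 0 \<le> x i j" and xs: "\<And>i. i < m \<Longrightarrow> (\<Sum>j<n. x i j) = r i"
    using x unfolding feasible_def by auto
  have A: "(\<Sum>i<m. r i * ph i \<mu>) \<le> (\<Sum>i<m. \<Sum>j<n. (\<kappa> i j + \<mu> j) * x i j + \<epsilon> * xlogx (x i j) (r i))"
  proof (rule sum_mono)
    fix i assume "i \<in> {..<m}"
    hence i: "i < m" by simp
    have "- \<epsilon> * r i * ln (\<Sum>j<n. exp (- (\<kappa> i j + \<mu> j) / \<epsilon>))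
        \<le> (\<Sum>j<n. (\<kappa> i j + \<mu> j) * x i j + \<epsilon> * xlogx (x i j) (r i))"
      using gibbs_ge[OF epos n1, of "\<lambda>j. x i j" "r i" "\<lambda>j. \<kappa> i j + \<mu> j"] xnn[OF i] xs[OF i] by simp
    thus "r i * ph i \<mu> \<le> (\<Sum>j<n. (\<kappa> i j + \<mu> j) * x i j + \<epsilon> * xlogx (x i j) (r i))"
      unfolding r_ph Zf_def .
  qed
  have B: "0 \<le> (\<Sum>j<n. beta (c j) (T * (\<Sum>i<m. x i j)) - (\<mu> j * (\<Sum>i<m. x i j) + c j * ln (1 - \<mu> j / T)))"
  proof (rule sum_nonneg)
    fix j assume "j \<in> {..<n}"
    hence j: "j < n" by simp
    have q: "0 \<le> (\<Sum>i<m. x i j)" using xnn j by (intro sum_nonneg) auto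
    show "0 \<le> beta (c j) (T * (\<Sum>i<m. x i j)) - (\<mu> j * (\<Sum>i<m. x i j) + c j * ln (1 - \<mu> j / T))"
      using beta_ge[OF cpos[OF j] Tpos _ _ q, of "\<mu> j"] M_mem[OF mu j] by simp
  qed
  show ?thesis using A B cost_split[of r x \<mu>] by linarith
qed

lemma xs_feasible:
  assumes r: "r \<in> RR"
  shows "feasible n m r (xs r \<mu>)"
  unfolding feasible_def
proof (intro conjI allI impI)
  fix i j assume i: "i < m" and "j < n"
  show "0 \<le> xs r \<mu> i j" unfolding xs_def using R_mem[OF r i] Zf_pos[of i \<mu>] by simp
next
  fix i assume i: "i < m"
  have "(\<Sum>j<n. xs r \<mu> i j) = r i * (\<Sum>j<n. exp (- (\<kappa> i j + \<mu> j) / \<epsilon>)) / Zf i \<mu>"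
    unfolding xs_def by (simp add: sum_distrib_left sum_divide_distrib)
  also have "\<dots> = r i" unfolding Zf_def[symmetric] using Zf_pos[of i \<mu>] by simp
  finally show "(\<Sum>j<n. xs r \<mu> i j) = r i" .
qed

lemma strong_dual:
  assumes r: "r \<in> RR"
    and kkt: "\<And>j. j < n \<Longrightarrow> beta (c j) (T * (\<Sum>i<m. xs r \<mu> i j)) = \<mu> j * (\<Sum>i<m. xs r \<mu> i j) + c j * ln (1 - \<mu> j / T)"
  shows "cost n m c T \<epsilon> \<kappa> r (xs r \<mu>) = (\<Sum>i<m. r i * ph i \<mu>) + hh \<mu>"
proof -
  have A: "(\<Sum>i<m. \<Sum>j<n. (\<kappa> i j + \<mu> j) * xs r \<mu> i j + \<epsilon> * xlogx (xs r \<mu> i j) (r i)) = (\<Sum>i<m. r i * ph i \<mu>)"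
  proof (rule sum.cong)
    fix i assume "i \<in> {..<m}"
    hence i: "i < m" by simp
    show "(\<Sum>j<n. (\<kappa> i j + \<mu> j) * xs r \<mu> i j + \<epsilon> * xlogx (xs r \<mu> i j) (r i)) = r i * ph i \<mu>"
      unfolding xs_def r_ph Zf_def
      using gibbs_eq[OF epos n1, of "r i" "\<lambda>j. \<kappa> i j + \<mu> j"] R_mem[OF r i] by simp
  qed simp
  have B: "(\<Sum>j<n. beta (c j) (T * (\<Sum>i<m. xs r \<mu> i j)) - (\<mu> j * (\<Sum>i<m. xs r \<mu> i j) + c j * ln (1 - \<mu> j / T))) = 0"
    using kkt by (intro sum.neutral) auto
  show ?thesis using cost_split[of r "xs r \<mu>" \<mu>] A B by simp
qed

end


context P5 begin

lemma kkt:
  assumes r: "r \<in> RR" and mu: "\<mu> \<in> MM" and mx: "\<forall>\<nu>\<in>MM. WW r \<nu> \<le> WW r \<mu>" and j: "j < n"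
  shows "beta (c j) (T * (\<Sum>i<m. xs r \<mu> i j)) = \<mu> j * (\<Sum>i<m. xs r \<mu> i j) + c j * ln (1 - \<mu> j / T)"
proof -
  define S where "S i = (\<Sum>k\<in>{..<n}-{j}. exp (- (\<kappa> i k + \<mu> k) / \<epsilon>))" for i
  define H where "H = (\<Sum>k\<in>{..<n}-{j}. c k * ln (1 - \<mu> k / T))"
  define F where "F t = (\<Sum>i<m. r i * (- \<epsilon> * ln (S i + exp (- (\<kappa> i j + t) / \<epsilon>))) - U i (r i))
                        + (H + c j * ln (1 - t / T))" for t
  define E where "E i = exp (- (\<kappa> i j + \<mu> j) / \<epsilon>)" for i
  have S0: "S i \<ge> 0" for i unfolding S_def by (intro sum_nonneg) auto
  have Feq: "WW r (\<mu>(j := t)) = F t" for t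
  proof -
    have e1: "ph i (\<mu>(j := t)) = - \<epsilon> * ln (S i + exp (- (\<kappa> i j + t) / \<epsilon>))" for i
      unfolding phi_def S_def using sum_upd[OF j, of "\<lambda>k v. exp (- (\<kappa> i k + v) / \<epsilon>)" \<mu> t] by simp
    have e2: "hh (\<mu>(j := t)) = H + c j * ln (1 - t / T)"
      unfolding hh_def H_def using sum_upd[OF j, of "\<lambda>k v. c k * ln (1 - v / T)" \<mu> t] by simp
    show ?thesis unfolding W_eq e1 e2 F_def ..
  qed
  have Fmu: "F (\<mu> j) = WW r \<mu>" using Feq[of "\<mu> j"] by simp
  have Fle: "F t \<le> F (\<mu> j)" if "0 \<le> t" "t < T" for t
  proof -
    have "\<mu>(j := t) \<in> MM" using mu j that by (auto simp: PiE_iff extensional_def)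
    thus ?thesis using mx Feq[of t] Fmu by auto
  qed
  have ZS: "Zf i \<mu> = S i + E i" for i
    unfolding Zf_def S_def E_def using sum_upd[OF j, of "\<lambda>k v. exp (- (\<kappa> i k + v) / \<epsilon>)" \<mu> "\<mu> j"] by simp
  define q where "q = (\<Sum>i<m. xs r \<mu> i j)"
  have mj: "0 \<le> \<mu> j" "\<mu> j < T" using M_mem[OF mu j] by auto
  have cj: "c j > 0" using cpos[OF j] .
  have dF: "(F has_real_derivative (q - c j / (T - \<mu> j))) (at (\<mu> j))"
  proof -
    have d1: "((\<lambda>t. \<Sum>i<m. r i * (- \<epsilon> * ln (S i + exp (- (\<kappa> i j + t) / \<epsilon>))) - U i (r i))
       has_real_derivative (\<Sum>i<m. r i * (E i / (S i + E i)) - 0)) (at (\<mu> j))"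
    proof (rule DERIV_sum)
      fix i assume "i \<in> {..<m}"
      show "((\<lambda>t. r i * (- \<epsilon> * ln (S i + exp (- (\<kappa> i j + t) / \<epsilon>))) - U i (r i))
         has_real_derivative r i * (E i / (S i + E i)) - 0) (at (\<mu> j))"
        unfolding E_def by (intro DERIV_diff DERIV_cmult deriv_g S0 epos DERIV_const)
    qed
    have d2: "((\<lambda>t. H + c j * ln (1 - t / T)) has_real_derivative (0 + - c j / (T - \<mu> j))) (at (\<mu> j))"
      by (intro DERIV_add DERIV_const deriv_h mj Tpos)
    have "(\<Sum>i<m. r i * (E i / (S i + E i)) - 0) = q"
      unfolding q_def xs_def ZS E_def by (simp add: E_def)
    thus ?thesis using DERIV_add[OF d1 d2] unfolding F_def by simp
  qed
  show ?thesis
  proof (cases "\<mu> j > 0")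
    case True
    have "q - c j / (T - \<mu> j) = 0"
    proof (rule DERIV_local_max[OF dF])
      show "0 < min (\<mu> j) (T - \<mu> j)" using True mj by simp
      show "\<forall>y. \<bar>\<mu> j - y\<bar> < min (\<mu> j) (T - \<mu> j) \<longrightarrow> F y \<le> F (\<mu> j)"
      proof (intro allI impI Fle)
        fix y assume "\<bar>\<mu> j - y\<bar> < min (\<mu> j) (T - \<mu> j)"
        thus "0 \<le> y" "y < T" by (auto simp: abs_less_iff)
      qed
    qed
    hence "q = c j / (T - \<mu> j)" by simp
    from beta_eq_pos[OF cj Tpos True mj(2) this] show ?thesis unfolding q_def .
  next
    case False
    hence m0: "\<mu> j = 0" using mj by simp
    have "q - c j / (T - \<mu> j) \<le> 0"
    proof (rule ccontr)
      assume "\<not> ?thesis"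
      hence pos: "0 < q - c j / (T - \<mu> j)" by simp
      obtain d where d: "d > 0" "\<forall>h>0. h < d \<longrightarrow> F (\<mu> j) < F (\<mu> j + h)"
        using DERIV_pos_inc_right[OF dF pos] by blast
      define h where "h = min (d/2) (T/2)"
      have h: "h > 0" "h < d" "\<mu> j + h < T" using d Tpos m0 unfolding h_def by auto
      have "F (\<mu> j) < F (\<mu> j + h)" using d h by blast
      moreover have "F (\<mu> j + h) \<le> F (\<mu> j)" using h m0 by (intro Fle) auto
      ultimately show False by simp
    qed
    hence "T * q \<le> c j" using m0 Tpos by (simp add: field_simps)
    from beta_eq_zero[OF cj Tpos this] show ?thesis unfolding q_def m0 .
  qed
qed

end



lemma cont_coord [continuous_intros]: "continuous_on S (\<lambda>x::nat \<Rightarrow> real. x j)"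
  by (rule continuous_on_subset[OF continuous_on_product_coordinates]) simp

lemma compact_PiE_real:
  fixes S :: "nat \<Rightarrow> real set"
  assumes "\<And>j. j < n \<Longrightarrow> compact (S j)"
  shows "compact (\<Pi>\<^sub>E j\<in>{..<n}. S j)"
proof -
  define S' where "S' j = (if j < n then S j else {undefined})" for j
  have eq: "(\<Pi>\<^sub>E j\<in>{..<n}. S j) = Pi\<^sub>E UNIV S'"
  proof (rule set_eqI)
    fix f :: "nat \<Rightarrow> real"
    show "f \<in> (\<Pi>\<^sub>E j\<in>{..<n}. S j) \<longleftrightarrow> f \<in> Pi\<^sub>E UNIV S'"
      unfolding PiE_iff extensional_def S'_def by (auto split: if_splits)
  qed
  have "compactin (product_topology (\<lambda>j. euclidean) UNIV) (Pi\<^sub>E UNIV S')"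
    by (subst compactin_PiE) (auto simp: S'_def assms)
  thus ?thesis unfolding eq euclidean_product_topology by simp
qed

context P5 begin

lemma ph_cont: "continuous_on A (ph i)"
proof -
  have "continuous_on A (\<lambda>\<mu>. - \<epsilon> * ln (Zf i \<mu>))"
    unfolding Zf_def using Zf_pos[of i] unfolding Zf_def
    using epos by (intro continuous_intros) (auto simp: less_le)
  thus ?thesis unfolding phi_def Zf_def .
qed

lemma DD_max: "\<exists>\<mu>\<in>MM. \<forall>\<nu>\<in>MM. DD \<nu> \<le> DD \<mu>"
proof -
  define \<mu>0 where "\<mu>0 = (\<lambda>j\<in>{..<n}. 0::real)"
  define r0 where "r0 = (\<lambda>i\<in>{..<m}. 0::real)"
  have mu0: "\<mu>0 \<in> MM" unfolding \<mu>0_def using Tpos by (simp add: restrict_PiE_iff)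
  have r0: "r0 \<in> RR" unfolding r0_def using rbpos by (simp add: restrict_PiE_iff less_imp_le)
  have W0: "WW r0 \<nu> = - (\<Sum>i<m. U i 0) + hh \<nu>" for \<nu>
  proof -
    have "(\<Sum>i<m. r0 i * ph i \<nu> - U i (r0 i)) = (\<Sum>i<m. - U i 0)"
      by (rule sum.cong) (auto simp: r0_def)
    thus ?thesis unfolding W_eq by (simp add: sum_negf)
  qed
  have h0: "hh \<mu>0 = 0" unfolding hh_def \<mu>0_def by (intro sum.neutral) auto
  define L where "L = DD \<mu>0 + (\<Sum>i<m. U i 0)"
  have L0: "L \<le> 0" using DD_le[OF r0, of \<mu>0] W0[of \<mu>0] h0 unfolding L_def by simp
  define s where "s j = T * (1 - exp ((L - 1) / c j))" for j
  have s: "0 \<le> s j" "s j < T" if "j < n" for j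
  proof -
    have "(L - 1) / c j < 0" using L0 cpos[OF that] by (simp add: divide_neg_pos)
    hence "exp ((L - 1) / c j) < 1" by simp
    thus "0 \<le> s j" unfolding s_def using Tpos by simp
    show "s j < T" unfolding s_def using Tpos by simp
  qed
  define K where "K = (\<Pi>\<^sub>E j\<in>{..<n}. {0..s j})"
  have KM: "K \<subseteq> MM"
  proof
    fix \<mu> assume "\<mu> \<in> K"
    thus "\<mu> \<in> MM" unfolding K_def PiE_iff using s by fastforce
  qed
  have Kc: "compact K" unfolding K_def by (rule compact_PiE_real) simp
  have mu0K: "\<mu>0 \<in> K" unfolding K_def \<mu>0_def using s by (simp add: restrict_PiE_iff)
  have contK: "continuous_on K DD"
  proof -
    have c1: "continuous_on K (\<lambda>\<mu>. \<Sum>i<m. mval (rbar i) (U i) (ph i \<mu>))"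
    proof (rule continuous_on_sum)
      fix i assume "i \<in> {..<m}"
      hence i: "i < m" by simp
      show "continuous_on K (\<lambda>\<mu>. mval (rbar i) (U i) (ph i \<mu>))"
        by (rule continuous_on_compose2[OF mval_cont[OF rbpos[OF i] Ucont[OF i] Uconc[OF i]] ph_cont]) simp
    qed
    have c2: "continuous_on K hh"
      unfolding hh_def
    proof (intro continuous_on_sum continuous_intros ballI)
      fix j \<mu> assume j: "j \<in> {..<n}" and mu: "\<mu> \<in> K"
      have "\<mu> j \<le> s j" using mu j unfolding K_def PiE_iff by auto
      hence "\<mu> j < T" using s j by force
      thus "1 - \<mu> j / T \<noteq> 0" using Tpos by (simp add: field_simps)
    qed (use Tpos in simp)
    show ?thesis unfolding DD_eq[abs_def] by (intro continuous_intros c1 c2)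
  qed
  obtain \<mu>s where mus: "\<mu>s \<in> K" "\<forall>\<nu>\<in>K. DD \<nu> \<le> DD \<mu>s"
    using continuous_attains_sup[OF Kc _ contK] mu0K by blast
  show ?thesis
  proof (intro bexI[of _ \<mu>s] ballI)
    show "\<mu>s \<in> MM" using mus KM by blast
    fix \<nu> assume nu: "\<nu> \<in> MM"
    show "DD \<nu> \<le> DD \<mu>s"
    proof (cases "\<nu> \<in> K")
      case True thus ?thesis using mus by blast
    next
      case False
      have "\<not> (\<forall>j\<in>{..<n}. \<nu> j \<in> {0..s j})"
      proof
        assume "\<forall>j\<in>{..<n}. \<nu> j \<in> {0..s j}"
        moreover have "\<nu> \<in> extensional {..<n}" using nu by (simp add: PiE_iff)
        ultimately have "\<nu> \<in> K" unfolding K_def PiE_iff by blast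
        thus False using False by simp
      qed
      then obtain j where j: "j < n" "\<not> \<nu> j \<in> {0..s j}" by blast
      have nj: "0 \<le> \<nu> j" "\<nu> j < T" using M_mem[OF nu j(1)] by auto
      hence gt: "\<nu> j > s j" using j(2) by auto
      have cj: "c j > 0" using cpos[OF j(1)] .
      have hle: "hh \<nu> \<le> c j * ln (1 - \<nu> j / T)"
      proof -
        have "hh \<nu> = c j * ln (1 - \<nu> j / T) + (\<Sum>k\<in>{..<n}-{j}. c k * ln (1 - \<nu> k / T))"
          unfolding hh_def by (rule sum.remove) (use j in auto)
        moreover have "(\<Sum>k\<in>{..<n}-{j}. c k * ln (1 - \<nu> k / T)) \<le> 0"
        proof (rule sum_nonpos)
          fix k assume "k \<in> {..<n}-{j}"
          hence k: "k < n" by simp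
          have "0 \<le> \<nu> k" "\<nu> k < T" using M_mem[OF nu k] by auto
          hence "0 < 1 - \<nu> k / T" "1 - \<nu> k / T \<le> 1" using Tpos by (auto simp: field_simps)
          hence "ln (1 - \<nu> k / T) \<le> 0" by simp
          thus "c k * ln (1 - \<nu> k / T) \<le> 0" using cpos[OF k] by (simp add: mult_nonneg_nonpos)
        qed
        ultimately show ?thesis by simp
      qed
      have "1 - \<nu> j / T < 1 - s j / T" using gt Tpos by (simp add: field_simps)
      also have "1 - s j / T = exp ((L - 1) / c j)" unfolding s_def using Tpos by simp
      finally have lt: "1 - \<nu> j / T < exp ((L - 1) / c j)" .
      have pos: "0 < 1 - \<nu> j / T" using nj Tpos by (simp add: field_simps)
      have "ln (1 - \<nu> j / T) < ln (exp ((L - 1) / c j))"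
        using lt pos by (subst ln_less_cancel_iff) auto
      hence "ln (1 - \<nu> j / T) < (L - 1) / c j" by simp
      hence "c j * ln (1 - \<nu> j / T) < L - 1" using cj by (simp add: field_simps)
      hence "DD \<nu> < DD \<mu>0" using DD_le[OF r0, of \<nu>] W0[of \<nu>] hle unfolding L_def by simp
      also have "DD \<mu>0 \<le> DD \<mu>s" using mus mu0K by blast
      finally show ?thesis by simp
    qed
  qed
qed

end


context P5 begin

lemma W_diff: "WW a \<mu> - WW a \<mu>' = (\<Sum>i<m. a i * (ph i \<mu> - ph i \<mu>')) + (hh \<mu> - hh \<mu>')"
proof -
  have "(\<Sum>i<m. a i * ph i \<mu> - U i (a i)) - (\<Sum>i<m. a i * ph i \<mu>' - U i (a i))
      = (\<Sum>i<m. (a i * ph i \<mu> - U i (a i)) - (a i * ph i \<mu>' - U i (a i)))"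
    by (rule sum_subtractf[symmetric])
  also have "\<dots> = (\<Sum>i<m. a i * (ph i \<mu> - ph i \<mu>'))"
    by (rule sum.cong) (simp_all add: algebra_simps)
  finally show ?thesis unfolding W_eq by simp
qed

lemma saddle_exists: "\<exists>\<mu>s\<in>MM. \<forall>\<nu>\<in>MM. WW (rof \<mu>s) \<nu> \<le> WW (rof \<mu>s) \<mu>s"
proof -
  obtain \<mu>s where mus: "\<mu>s \<in> MM" and mx: "\<forall>\<nu>\<in>MM. DD \<nu> \<le> DD \<mu>s" using DD_max by blast
  define rs where "rs = rof \<mu>s"
  have rsR: "rs \<in> RR" unfolding rs_def by (rule rof_R)
  have "\<forall>\<nu>\<in>MM. WW rs \<nu> \<le> WW rs \<mu>s"
  proof (rule ballI, rule ccontr)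
    fix \<nu> assume nu: "\<nu> \<in> MM" and nle: "\<not> WW rs \<nu> \<le> WW rs \<mu>s"
    define \<delta> where "\<delta> = WW rs \<nu> - WW rs \<mu>s"
    have dpos: "\<delta> > 0" using nle unfolding \<delta>_def by simp
    have mpos: "real m > 0" using m1 by simp
    define e where "e = \<delta> / (2 * T * real m)"
    have epos': "e > 0" unfolding e_def using dpos Tpos mpos by simp
    have "\<forall>i\<in>{..<m}. \<exists>\<eta>. \<eta> > 0 \<and> (\<forall>a'. \<bar>a' - ph i \<mu>s\<bar> < \<eta> \<longrightarrow>
            \<bar>amin (rbar i) (U i) a' - amin (rbar i) (U i) (ph i \<mu>s)\<bar> < e)"
    proof
      fix i assume "i \<in> {..<m}"
      hence i: "i < m" by simp
      show "\<exists>\<eta>. \<eta> > 0 \<and> (\<forall>a'. \<bar>a' - ph i \<mu>s\<bar> < \<eta> \<longrightarrow>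
            \<bar>amin (rbar i) (U i) a' - amin (rbar i) (U i) (ph i \<mu>s)\<bar> < e)"
        using amin_cont[OF rbpos[OF i] Ucont[OF i] Uconc[OF i] epos', of "ph i \<mu>s"] by blast
    qed
    then obtain \<eta> where eta: "\<forall>i\<in>{..<m}. \<eta> i > 0 \<and> (\<forall>a'. \<bar>a' - ph i \<mu>s\<bar> < \<eta> i \<longrightarrow>
            \<bar>amin (rbar i) (U i) a' - amin (rbar i) (U i) (ph i \<mu>s)\<bar> < e)"
      by (rule bchoice[elim_format]) blast
    define \<eta>0 where "\<eta>0 = Min (\<eta> ` {..<m})"
    have ne: "\<eta> ` {..<m} \<noteq> {}" using m1 by (auto simp: lessThan_empty_iff)
    have eta0: "\<eta>0 > 0" unfolding \<eta>0_def using eta ne by (subst Min_gr_iff) auto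
    have eta0le: "\<eta>0 \<le> \<eta> i" if "i < m" for i unfolding \<eta>0_def using that by (intro Min_le) auto
    define t where "t = min (1/2) (\<eta>0 / (2 * T))"
    have t: "0 < t" "t \<le> 1" "t * T < \<eta>0"
    proof -
      show "0 < t" unfolding t_def using eta0 Tpos by simp
      show "t \<le> 1" unfolding t_def by simp
      have "t * T \<le> \<eta>0 / (2 * T) * T" unfolding t_def using Tpos by (intro mult_right_mono) auto
      also have "\<dots> = \<eta>0 / 2" using Tpos by simp
      finally show "t * T < \<eta>0" using eta0 by simp
    qed
    define \<mu>t where "\<mu>t = mix t \<mu>s \<nu>"
    have mut: "\<mu>t \<in> MM" unfolding \<mu>t_def using mix_M[OF mus nu] t by simp
    define rt where "rt = rof \<mu>t"
    have close: "\<bar>rt i - rs i\<bar> < e" if i: "i < m" for i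
    proof -
      have "\<forall>j<n. \<mu>t j \<le> \<mu>s j + t * T \<and> \<mu>s j \<le> \<mu>t j + t * T"
      proof (intro allI impI)
        fix j assume j: "j < n"
        have a: "0 \<le> \<mu>s j" "\<mu>s j < T" "0 \<le> \<nu> j" "\<nu> j < T" using M_mem[OF mus j] M_mem[OF nu j] by auto
        have eq: "\<mu>t j - \<mu>s j = t * (\<nu> j - \<mu>s j)" unfolding \<mu>t_def mix_def using j by (simp add: algebra_simps)
        have "\<bar>\<nu> j - \<mu>s j\<bar> \<le> T" using a by auto
        hence "\<bar>t * (\<nu> j - \<mu>s j)\<bar> \<le> t * T" using t by (simp add: abs_mult mult_left_mono)
        thus "\<mu>t j \<le> \<mu>s j + t * T \<and> \<mu>s j \<le> \<mu>t j + t * T" using eq by (simp add: abs_le_iff)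
      qed
      hence "ph i \<mu>t \<le> ph i \<mu>s + t * T" "ph i \<mu>s \<le> ph i \<mu>t + t * T"
        using phi_lip[OF epos n1] by auto
      hence "\<bar>ph i \<mu>t - ph i \<mu>s\<bar> < \<eta> i" using t eta0le[OF i] by (simp add: abs_less_iff)
      hence "\<bar>amin (rbar i) (U i) (ph i \<mu>t) - amin (rbar i) (U i) (ph i \<mu>s)\<bar> < e"
        using eta i by auto
      thus ?thesis unfolding rt_def rs_def rof_def using i by simp
    qed
    have phclose: "\<bar>ph i \<mu>t - ph i \<mu>s\<bar> \<le> t * T" for i
    proof -
      have "\<forall>j<n. \<mu>t j \<le> \<mu>s j + t * T \<and> \<mu>s j \<le> \<mu>t j + t * T"
      proof (intro allI impI)
        fix j assume j: "j < n"
        have a: "0 \<le> \<mu>s j" "\<mu>s j < T" "0 \<le> \<nu> j" "\<nu> j < T" using M_mem[OF mus j] M_mem[OF nu j] by auto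
        have eq: "\<mu>t j - \<mu>s j = t * (\<nu> j - \<mu>s j)" unfolding \<mu>t_def mix_def using j by (simp add: algebra_simps)
        have "\<bar>\<nu> j - \<mu>s j\<bar> \<le> T" using a by auto
        hence "\<bar>t * (\<nu> j - \<mu>s j)\<bar> \<le> t * T" using t by (simp add: abs_mult mult_left_mono)
        thus "\<mu>t j \<le> \<mu>s j + t * T \<and> \<mu>s j \<le> \<mu>t j + t * T" using eq by (simp add: abs_le_iff)
      qed
      hence "ph i \<mu>t \<le> ph i \<mu>s + t * T" "ph i \<mu>s \<le> ph i \<mu>t + t * T"
        using phi_lip[OF epos n1] by auto
      thus ?thesis by (simp add: abs_le_iff)
    qed
    have conc: "(1 - t) * WW rs \<mu>s + t * WW rs \<nu> \<le> WW rs \<mu>t"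
      unfolding \<mu>t_def using W_concave[OF rsR mus nu] t by simp
    hence A: "t * \<delta> \<le> WW rs \<mu>t - WW rs \<mu>s" unfolding \<delta>_def by (simp add: algebra_simps)
    have rtR: "rt \<in> RR" unfolding rt_def by (rule rof_R)
    have "WW rt \<mu>t = DD \<mu>t" unfolding rt_def DD_def ..
    also have "\<dots> \<le> DD \<mu>s" using mx mut by blast
    also have "\<dots> = WW rs \<mu>s" unfolding rs_def DD_def ..
    also have "\<dots> \<le> WW rt \<mu>s" unfolding rs_def by (rule rof_min[OF rtR])
    finally have B: "WW rt \<mu>t - WW rt \<mu>s \<le> 0" by simp
    have "(WW rs \<mu>t - WW rs \<mu>s) - (WW rt \<mu>t - WW rt \<mu>s)
        = (\<Sum>i<m. rs i * (ph i \<mu>t - ph i \<mu>s)) - (\<Sum>i<m. rt i * (ph i \<mu>t - ph i \<mu>s))"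
      unfolding W_diff by simp
    also have "\<dots> = (\<Sum>i<m. (rs i - rt i) * (ph i \<mu>t - ph i \<mu>s))"
      by (simp add: sum_subtractf[symmetric] left_diff_distrib)
    also have "\<dots> \<le> (\<Sum>i<m. e * (t * T))"
    proof (rule sum_mono)
      fix i assume "i \<in> {..<m}"
      hence i: "i < m" by simp
      have "(rs i - rt i) * (ph i \<mu>t - ph i \<mu>s) \<le> \<bar>rs i - rt i\<bar> * \<bar>ph i \<mu>t - ph i \<mu>s\<bar>"
        by (metis abs_ge_self abs_mult)
      also have "\<dots> \<le> e * (t * T)"
        using close[OF i] phclose[of i] by (intro mult_mono) (auto simp: abs_minus_commute)
      finally show "(rs i - rt i) * (ph i \<mu>t - ph i \<mu>s) \<le> e * (t * T)" .
    qed
    also have "\<dots> = real m * e * t * T" by simp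
    also have "\<dots> = t * \<delta> / 2" unfolding e_def using Tpos mpos by (simp add: field_simps)
    finally have "(WW rs \<mu>t - WW rs \<mu>s) - (WW rt \<mu>t - WW rt \<mu>s) \<le> t * \<delta> / 2" .
    hence "t * \<delta> \<le> t * \<delta> / 2" using A B by linarith
    thus False using t dpos by (simp add: field_simps)
  qed
  thus ?thesis using mus unfolding rs_def by blast
qed

end


context P5 begin

lemma psi_W: "r \<in> RR \<Longrightarrow> WW r \<mu> = (\<Sum>i<m. r i * ph i \<mu>) + hh \<mu> - (\<Sum>i<m. U i (r i))"
  unfolding W_eq by (simp add: sum_subtractf)

theorem main:
  "\<exists>rs \<mu>s.
     (\<forall>p. (fst p \<in> RR \<and> snd p \<in> MM \<and>
            (\<forall>r\<in>RR. \<forall>\<mu>\<in>MM. WW (fst p) \<mu> \<le> WW (fst p) (snd p) \<and> WW (fst p) (snd p) \<le> WW r (snd p)))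
           \<longleftrightarrow> p = (rs, \<mu>s))
   \<and> {r \<in> RR. \<forall>r'\<in>RR. psi n m c T \<epsilon> \<kappa> U r \<le> psi n m c T \<epsilon> \<kappa> U r'} = {rs}"
proof -
  obtain \<mu>s where mus: "\<mu>s \<in> MM" and mxs: "\<forall>\<nu>\<in>MM. WW (rof \<mu>s) \<nu> \<le> WW (rof \<mu>s) \<mu>s"
    using saddle_exists by blast
  define rs where "rs = rof \<mu>s"
  have rsR: "rs \<in> RR" unfolding rs_def by (rule rof_R)
  have sad: "\<forall>r\<in>RR. \<forall>\<mu>\<in>MM. WW rs \<mu> \<le> WW rs \<mu>s \<and> WW rs \<mu>s \<le> WW r \<mu>s"
    using mxs rof_min unfolding rs_def by blast
  have uniq: "(fst p \<in> RR \<and> snd p \<in> MM \<and>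
            (\<forall>r\<in>RR. \<forall>\<mu>\<in>MM. WW (fst p) \<mu> \<le> WW (fst p) (snd p) \<and> WW (fst p) (snd p) \<le> WW r (snd p)))
           \<longleftrightarrow> p = (rs, \<mu>s)" for p
  proof
    assume "p = (rs, \<mu>s)"
    thus "fst p \<in> RR \<and> snd p \<in> MM \<and>
            (\<forall>r\<in>RR. \<forall>\<mu>\<in>MM. WW (fst p) \<mu> \<le> WW (fst p) (snd p) \<and> WW (fst p) (snd p) \<le> WW r (snd p))"
      using rsR mus sad by simp
  next
    assume H: "fst p \<in> RR \<and> snd p \<in> MM \<and>
            (\<forall>r\<in>RR. \<forall>\<mu>\<in>MM. WW (fst p) \<mu> \<le> WW (fst p) (snd p) \<and> WW (fst p) (snd p) \<le> WW r (snd p))"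
    obtain r1 \<mu>1 where p: "p = (r1, \<mu>1)" by (cases p)
    have r1: "r1 \<in> RR" and mu1: "\<mu>1 \<in> MM"
      and s1: "\<forall>r\<in>RR. \<forall>\<mu>\<in>MM. WW r1 \<mu> \<le> WW r1 \<mu>1 \<and> WW r1 \<mu>1 \<le> WW r \<mu>1"
      using H unfolding p by auto
    have c1: "WW r1 \<mu>s \<le> WW r1 \<mu>1" using s1 rsR mus by blast
    have c2: "WW r1 \<mu>1 \<le> WW rs \<mu>1" using s1 rsR mu1 by blast
    have c3: "WW rs \<mu>1 \<le> WW rs \<mu>s" using sad r1 mu1 by blast
    have c4: "WW rs \<mu>s \<le> WW r1 \<mu>s" using sad r1 mus by blast
    have "WW r1 \<mu>s \<le> WW (rof \<mu>s) \<mu>s" using c4 c1 c2 c3 unfolding rs_def by linarith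
    hence req: "r1 = rs" unfolding rs_def by (rule rof_unique[OF r1])
    have "\<mu>1 = \<mu>s"
    proof (rule ccontr)
      assume ne: "\<mu>1 \<noteq> \<mu>s"
      have eqv: "WW rs \<mu>1 = WW rs \<mu>s" using c1 c2 c3 c4 by linarith
      have "(WW rs \<mu>1 + WW rs \<mu>s) / 2 < WW rs (mix (1/2) \<mu>1 \<mu>s)"
        by (rule W_strict[OF rsR mu1 mus ne])
      moreover have "WW rs (mix (1/2) \<mu>1 \<mu>s) \<le> WW rs \<mu>s"
        using sad mix_M[OF mu1 mus, of "1/2"] rsR by simp
      ultimately show False using eqv by simp
    qed
    thus "p = (rs, \<mu>s)" using req p by simp
  qed
  have kkt': "\<And>j. j < n \<Longrightarrow> beta (c j) (T * (\<Sum>i<m. xs rs \<mu>s i j)) = \<mu>s j * (\<Sum>i<m. xs rs \<mu>s i j) + c j * ln (1 - \<mu>s j / T)"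
    using kkt[OF rsR mus] mxs unfolding rs_def by blast
  have Clow: "(\<Sum>i<m. r i * ph i \<mu>s) + hh \<mu>s \<le> Cmin n m c T \<epsilon> \<kappa> r" if r: "r \<in> RR" for r
    unfolding Cmin_def
  proof (rule cINF_greatest)
    show "{x. feasible n m r x} \<noteq> {}" using xs_feasible[OF r, of \<mu>s] by blast
    fix x assume "x \<in> {x. feasible n m r x}"
    thus "(\<Sum>i<m. r i * ph i \<mu>s) + hh \<mu>s \<le> cost n m c T \<epsilon> \<kappa> r x"
      using weak_dual[OF r mus] by simp
  qed
  have Cup: "Cmin n m c T \<epsilon> \<kappa> rs \<le> (\<Sum>i<m. rs i * ph i \<mu>s) + hh \<mu>s"
  proof -
    have "Cmin n m c T \<epsilon> \<kappa> rs \<le> cost n m c T \<epsilon> \<kappa> rs (xs rs \<mu>s)"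
      unfolding Cmin_def
    proof (rule cINF_lower)
      show "bdd_below ((\<lambda>x. cost n m c T \<epsilon> \<kappa> rs x) ` {x. feasible n m rs x})"
        by (rule bdd_belowI2[where m = "(\<Sum>i<m. rs i * ph i \<mu>s) + hh \<mu>s"]) (use weak_dual[OF rsR mus] in simp)
      show "xs rs \<mu>s \<in> {x. feasible n m rs x}" using xs_feasible[OF rsR] by simp
    qed
    also have "\<dots> = (\<Sum>i<m. rs i * ph i \<mu>s) + hh \<mu>s" by (rule strong_dual[OF rsR kkt'])
    finally show ?thesis .
  qed
  have psi_ge: "WW r \<mu>s \<le> psi n m c T \<epsilon> \<kappa> U r" if r: "r \<in> RR" for r
    using Clow[OF r] psi_W[OF r, of \<mu>s] unfolding psi_def by simp
  have psi_rs: "psi n m c T \<epsilon> \<kappa> U rs = WW rs \<mu>s"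
    using Clow[OF rsR] Cup psi_W[OF rsR, of \<mu>s] unfolding psi_def by simp
  have argmin: "{r \<in> RR. \<forall>r'\<in>RR. psi n m c T \<epsilon> \<kappa> U r \<le> psi n m c T \<epsilon> \<kappa> U r'} = {rs}"
  proof (rule set_eqI, rule iffI)
    fix r assume "r \<in> {r \<in> RR. \<forall>r'\<in>RR. psi n m c T \<epsilon> \<kappa> U r \<le> psi n m c T \<epsilon> \<kappa> U r'}"
    hence r: "r \<in> RR" and le: "psi n m c T \<epsilon> \<kappa> U r \<le> psi n m c T \<epsilon> \<kappa> U rs" using rsR by auto
    have "WW r \<mu>s \<le> WW (rof \<mu>s) \<mu>s" using psi_ge[OF r] le psi_rs unfolding rs_def by simp
    hence "r = rof \<mu>s" by (rule rof_unique[OF r])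
    thus "r \<in> {rs}" unfolding rs_def by simp
  next
    fix r assume "r \<in> {rs}"
    hence r: "r = rs" by simp
    have "\<forall>r'\<in>RR. psi n m c T \<epsilon> \<kappa> U rs \<le> psi n m c T \<epsilon> \<kappa> U r'"
    proof
      fix r' assume r': "r' \<in> RR"
      have "psi n m c T \<epsilon> \<kappa> U rs = WW rs \<mu>s" by (rule psi_rs)
      also have "\<dots> \<le> WW r' \<mu>s" using sad r' mus by blast
      also have "\<dots> \<le> psi n m c T \<epsilon> \<kappa> U r'" by (rule psi_ge[OF r'])
      finally show "psi n m c T \<epsilon> \<kappa> U rs \<le> psi n m c T \<epsilon> \<kappa> U r'" .
    qed
    thus "r \<in> {r \<in> RR. \<forall>r'\<in>RR. psi n m c T \<epsilon> \<kappa> U r \<le> psi n m c T \<epsilon> \<kappa> U r'}" using r rsR by simp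
  qed
  show ?thesis using uniq argmin by blast
qed

end

theorem proposition5:
  fixes n m :: nat and c rbar :: "nat \<Rightarrow> real" and T \<epsilon> :: real
    and \<kappa> :: "nat \<Rightarrow> nat \<Rightarrow> real" and U :: "nat \<Rightarrow> real \<Rightarrow> real"
  assumes "n \<ge> 1" and "m \<ge> 1"
    and "\<forall>j<n. c j > 0" and "T > 0" and "\<epsilon> > 0"
    and "\<forall>i<m. \<forall>j<n. \<kappa> i j \<ge> 0"
    and "\<forall>i<m. rbar i > 0"
    and "\<forall>i<m. continuous_on {0..rbar i} (U i)"
    and "\<forall>i<m. mono_on {0..rbar i} (U i)"
    and "\<forall>i<m. strict_concave_on {0..rbar i} (U i)"
  defines "R \<equiv> (\<Pi>\<^sub>E i\<in>{..<m}. {0..rbar i})"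
    and "M \<equiv> (\<Pi>\<^sub>E j\<in>{..<n}. {0..<T})"
  shows "\<exists>rs \<mu>s.
           (\<forall>p. (fst p \<in> R \<and> snd p \<in> M \<and>
                  (\<forall>r\<in>R. \<forall>\<mu>\<in>M. W n m c T \<epsilon> \<kappa> U (fst p) \<mu> \<le> W n m c T \<epsilon> \<kappa> U (fst p) (snd p)
                        \<and> W n m c T \<epsilon> \<kappa> U (fst p) (snd p) \<le> W n m c T \<epsilon> \<kappa> U r (snd p)))
                 \<longleftrightarrow> p = (rs, \<mu>s))
         \<and> {r \<in> R. \<forall>r'\<in>R. psi n m c T \<epsilon> \<kappa> U r \<le> psi n m c T \<epsilon> \<kappa> U r'} = {rs}"
proof -
  interpret P5 n m c rbar T \<epsilon> \<kappa> U
    by unfold_locales (use assms in auto)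
  show ?thesis unfolding R_def M_def by (rule main)
qed


end
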